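(* Let $M$ be a non-expandable A-primitive star matrix of a partition of the hypercube ${\bf Z}_q^n$ into subcubes all of the same dimension. Then for every column $c$ of $M$, the number of entries of $c$ lying in ${\bf Z}_q$ is a power of $q$, and there is a transfractal $T$ of $M$ whose leading column is $c$ and whose set of rows is exactly the set of rows in which $c$ has an entry from ${\bf Z}_q$.
   Context: A subcube of ${\bf Z}_q^n$ is obtained by fixing some coordinates and letting the others run through ${\bf Z}_q$; its dimension is the number of free coordinates, and its star pattern is the vector over ${\bf Z}_q\cup\{*\}$ with fixed values in fixed coordinates and $*$ in free ones. The star matrix of a partition of ${\bf Z}_q^n$ into subcubes is the matrix whose rows are the star patterns of the subcubes. It is A-primitive if no column consists only of $*$. Bang: given such an A-primitive star matrix $M$ of a partition into subcubes of equal dimension, a column $i$ and $a\in{\bf Z}_q$, the bang of $M$ at $(i,a)$ is obtained by: (1) deleting column $i$; (2) deleting all rows having in column $i$ a value of ${\bf Z}_q$ different from $a$; (3) replacing each row having $a$ in column $i$ by $q$ identical copies; (4) for each such group of $q$ copies, adjoining a new column having the values $0,1,\dots,q-1$ (each once) in the rows of that group and $*$ in all other rows; (5) deleting all columns consisting only of $*$. (The result is again an A-primitive star matrix of a partition into the same number of subcubes of equal dimension.) $M$ is expandable if some bang of $M$ has more columns than $M$, and non-expandable otherwise. Fractal matrices: $M_{q,0}$ has one row and zero columns; for $m\ge1$, $M_{q,m}$ consists of $q$ horizontal blocks indexed by $a=0,\dots,q-1$, each with $q^{m-1}$ rows; its first column has entry $a$ in every row of block $a$; its remaining columns are divided into $q$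 vertical stripes of width equal to the number of columns of $M_{q,m-1}$, and in block $a$ the $a$-th stripe is a copy of $M_{q,m-1}$ while other stripes of block $a$ are all $*$. A fractal matrix is any matrix obtained from some $M_{q,m}$ ($m\ge1$) by permuting rows and columns. A submatrix $T$ of $M$ (a set of rows and a set of columns, not necessarily consecutive) is a transfractal if $T$ is a fractal matrix and each column of $M$ used by $T$ contains only $*$ in all rows of $M$ not used by $T$. The leading column of a transfractal is its unique column containing elements of ${\bf Z}_q$ in all rows of $T$. *)

theory Defs
  imports Main
begin

text \<open>A star matrix is given by a set of row indices R, a set of column indices C and
  entries M r j :: nat option, where None stands for * and Some a for a \<in> Z_q (a < q).\<close>

definition star_entries_ok :: "nat \<Rightarrow> 'r set \<Rightarrow> 'c set \<Rightarrow> ('r \<Rightarrow> 'c \<Rightarrow> nat option) \<Rightarrow> bool" where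
  "star_entries_ok q R C M \<longleftrightarrow> (\<forall>r\<in>R. \<forall>j\<in>C. \<forall>a. M r j = Some a \<longrightarrow> a < q)"

definition in_subcube :: "'c set \<Rightarrow> ('r \<Rightarrow> 'c \<Rightarrow> nat option) \<Rightarrow> 'r \<Rightarrow> ('c \<Rightarrow> nat) \<Rightarrow> bool" where
  "in_subcube C M r x \<longleftrightarrow> (\<forall>j\<in>C. M r j = None \<or> M r j = Some (x j))"

definition star_partition :: "nat \<Rightarrow> 'r set \<Rightarrow> 'c set \<Rightarrow> ('r \<Rightarrow> 'c \<Rightarrow> nat option) \<Rightarrow> bool" where
  "star_partition q R C M \<longleftrightarrow> finite R \<and> finite C \<and> star_entries_ok q R C M \<and>
     (\<forall>x. (\<forall>j\<in>C. x j < q) \<longrightarrow> (\<exists>!r. r \<in> R \<and> in_subcube C M r x))"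

definition equal_dimension :: "'r set \<Rightarrow> 'c set \<Rightarrow> ('r \<Rightarrow> 'c \<Rightarrow> nat option) \<Rightarrow> bool" where
  "equal_dimension R C M \<longleftrightarrow> (\<exists>d. \<forall>r\<in>R. card {j\<in>C. M r j = None} = d)"

definition A_primitive :: "'r set \<Rightarrow> 'c set \<Rightarrow> ('r \<Rightarrow> 'c \<Rightarrow> nat option) \<Rightarrow> bool" where
  "A_primitive R C M \<longleftrightarrow> (\<forall>j\<in>C. \<exists>r\<in>R. M r j \<noteq> None)"

text \<open>Rows of the result: (r,0) for rows r with * in column i, and
  (r,k), k<q, for the q copies of rows r with a in column i. Columns: Inl j for old columns
  j \<noteq> i, Inr r for the new column adjoined to the group of copies of row r; finally the
  all-* columns are deleted.\<close>
definition bang_rows :: "nat \<Rightarrow> 'r set \<Rightarrow> ('r \<Rightarrow> 'c \<Rightarrow> nat option) \<Rightarrow> 'c \<Rightarrow> nat \<Rightarrow> ('r \<times> nat) set" where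
  "bang_rows q R M i a = {(r, k). r \<in> R \<and> M r i = None \<and> k = 0} \<union> {(r, k). r \<in> R \<and> M r i = Some a \<and> k < q}"

definition bang_ent :: "('r \<Rightarrow> 'c \<Rightarrow> nat option) \<Rightarrow> 'c \<Rightarrow> nat \<Rightarrow> ('r \<times> nat) \<Rightarrow> ('c + 'r) \<Rightarrow> nat option" where
  "bang_ent M i a rk col = (case col of
      Inl j \<Rightarrow> M (fst rk) j
    | Inr r' \<Rightarrow> (if fst rk = r' \<and> M r' i = Some a then Some (snd rk) else None))"

definition bang_cols :: "nat \<Rightarrow> 'r set \<Rightarrow> 'c set \<Rightarrow> ('r \<Rightarrow> 'c \<Rightarrow> nat option) \<Rightarrow> 'c \<Rightarrow> nat \<Rightarrow> ('c + 'r) set" where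
  "bang_cols q R C M i a =
     {col \<in> Inl ` (C - {i}) \<union> Inr ` {r \<in> R. M r i = Some a}.
        \<exists>rk \<in> bang_rows q R M i a. bang_ent M i a rk col \<noteq> None}"

definition expandable :: "nat \<Rightarrow> 'r set \<Rightarrow> 'c set \<Rightarrow> ('r \<Rightarrow> 'c \<Rightarrow> nat option) \<Rightarrow> bool" where
  "expandable q R C M \<longleftrightarrow> (\<exists>i\<in>C. \<exists>a<q. card (bang_cols q R C M i a) > card C)"

text \<open>Fractal matrices M_{q,m}: rows 0..<q^m, columns 0..<fractal_width q m.
  Block a consists of rows a*q^(m-1) .. (a+1)*q^(m-1)-1; column 0 is the first column,
  columns 1.. are divided into q stripes of width fractal_width q (m-1).\<close>
fun fractal_width :: "nat \<Rightarrow> nat \<Rightarrow> nat" where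
  "fractal_width q 0 = 0"
| "fractal_width q (Suc m) = 1 + q * fractal_width q m"

fun fractal :: "nat \<Rightarrow> nat \<Rightarrow> nat \<Rightarrow> nat \<Rightarrow> nat option" where
  "fractal q 0 r j = None"
| "fractal q (Suc m) r j =
     (let a = r div q ^ m; r' = r mod q ^ m in
      if j = 0 then Some a
      else (let j' = j - 1; w = fractal_width q m in
            if j' div w = a then fractal q m r' (j' mod w) else None))"

definition is_fractal :: "nat \<Rightarrow> ('r \<Rightarrow> 'c \<Rightarrow> nat option) \<Rightarrow> 'r set \<Rightarrow> 'c set \<Rightarrow> bool" where
  "is_fractal q M R' C' \<longleftrightarrow> (\<exists>m\<ge>1. \<exists>\<rho> \<gamma>. bij_betw \<rho> R' {..<q ^ m} \<and> bij_betw \<gamma> C' {..<fractal_width q m} \<and>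
      (\<forall>r\<in>R'. \<forall>j\<in>C'. M r j = fractal q m (\<rho> r) (\<gamma> j)))"

definition transfractal :: "nat \<Rightarrow> 'r set \<Rightarrow> 'c set \<Rightarrow> ('r \<Rightarrow> 'c \<Rightarrow> nat option) \<Rightarrow> 'r set \<Rightarrow> 'c set \<Rightarrow> bool" where
  "transfractal q R C M R' C' \<longleftrightarrow> R' \<subseteq> R \<and> C' \<subseteq> C \<and> is_fractal q M R' C' \<and>
     (\<forall>j\<in>C'. \<forall>r\<in>R - R'. M r j = None)"

definition leading_column :: "('r \<Rightarrow> 'c \<Rightarrow> nat option) \<Rightarrow> 'r set \<Rightarrow> 'c set \<Rightarrow> 'c \<Rightarrow> bool" where
  "leading_column M R' C' c \<longleftrightarrow> c \<in> C' \<and> (\<forall>r\<in>R'. M r c \<noteq> None) \<and>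
     (\<forall>c'\<in>C'. (\<forall>r\<in>R'. M r c' \<noteq> None) \<longrightarrow> c' = c)"

end

theory Submission
  imports Defs Complex_Main "HOL-Library.Function_Algebras" "HOL-Library.FuncSet"
begin

lemma fun_sum_apply': "(sum f A) x = (\<Sum>a\<in>A. f a x)" for f :: "'a \<Rightarrow> 'b \<Rightarrow> real"
  by (induction A rule: infinite_finite_induct) auto

interpretation FV: vector_space "\<lambda>(a::real) (f::'r \<Rightarrow> real) x. a * f x"
  by unfold_locales (auto simp: fun_eq_iff algebra_simps)

lemma dim_bound:
  fixes \<phi> :: "'k \<Rightarrow> 'r \<Rightarrow> real"
  assumes fT: "finite T" and fK: "finite K"
    and supp: "\<And>k x. k \<in> K \<Longrightarrow> x \<notin> T \<Longrightarrow> \<phi> k x = 0"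
    and indep: "\<And>\<mu>. (\<forall>r\<in>T. (\<Sum>k\<in>K. \<mu> k * \<phi> k r) = 0) \<Longrightarrow> (\<forall>k\<in>K. \<mu> k = 0)"
  shows "card K \<le> card T"
proof -
  have inj: "inj_on \<phi> K"
  proof (rule inj_onI)
    fix k1 k2 assume k: "k1 \<in> K" "k2 \<in> K" "\<phi> k1 = \<phi> k2"
    show "k1 = k2"
    proof (rule ccontr)
      assume ne: "k1 \<noteq> k2"
      define \<mu> where "\<mu> k = (if k = k1 then 1 else if k = k2 then -1 else (0::real))" for k
      have "\<forall>r\<in>T. (\<Sum>k\<in>K. \<mu> k * \<phi> k r) = 0"
      proof
        fix r assume "r \<in> T"
        have "(\<Sum>k\<in>K. \<mu> k * \<phi> k r) = (\<Sum>k\<in>{k1,k2}. \<mu> k * \<phi> k r)"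
          by (rule sum.mono_neutral_right) (use fK k in \<open>auto simp: \<mu>_def\<close>)
        also have "\<dots> = 0" using ne k by (simp add: \<mu>_def)
        finally show "(\<Sum>k\<in>K. \<mu> k * \<phi> k r) = 0" .
      qed
      from indep[OF this] k(1) have "\<mu> k1 = 0" by blast
      then show False by (simp add: \<mu>_def)
    qed
  qed
  let ?A = "\<phi> ` K"
  let ?B = "(\<lambda>r x. if x = r then 1 else (0::real)) ` T"
  have iA: "FV.independent ?A"
  proof (rule FV.independent_if_scalars_zero)
    show "finite ?A" using fK by simp
    fix f :: "('r \<Rightarrow> real) \<Rightarrow> real" and x
    assume s: "(\<Sum>x\<in>?A. (\<lambda>y. f x * x y)) = 0" and x: "x \<in> ?A"
    have "\<forall>k\<in>K. (f \<circ> \<phi>) k = 0"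
    proof (rule indep, intro ballI)
      fix r assume "r \<in> T"
      have "(\<Sum>x\<in>?A. (\<lambda>y. f x * x y)) r = 0" using s by simp
      then have "(\<Sum>x\<in>?A. f x * x r) = 0" by (simp add: fun_sum_apply')
      then show "(\<Sum>k\<in>K. (f \<circ> \<phi>) k * \<phi> k r) = 0"
        using sum.reindex[OF inj, of "\<lambda>x. f x * x r"] by simp
    qed
    then show "f x = 0" using x by auto
  qed
  have sp: "?A \<subseteq> FV.span ?B"
  proof
    fix v assume "v \<in> ?A"
    then obtain k where k: "k \<in> K" "v = \<phi> k" by auto
    have "v = (\<Sum>r\<in>T. (\<lambda>x. \<phi> k r * (if x = r then 1 else 0)))"
    proof
      fix x
      show "v x = (\<Sum>r\<in>T. (\<lambda>x. \<phi> k r * (if x = r then 1 else 0))) x"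
        using supp[OF k(1)] fT k by (auto simp: fun_sum_apply' if_distrib cong: if_cong)
    qed
    also have "\<dots> \<in> FV.span ?B"
      by (intro FV.span_sum FV.span_scale FV.span_base) auto
    finally show "v \<in> FV.span ?B" .
  qed
  have "card ?A \<le> card ?B" using FV.independent_span_bound[OF _ iA sp] fT by auto
  also have "\<dots> \<le> card T" using fT card_image_le by blast
  finally show ?thesis using card_image[OF inj] by simp
qed

locale SPL =
  fixes q :: nat and R :: "'r set" and C :: "'c set" and M :: "'r \<Rightarrow> 'c \<Rightarrow> nat option"
  assumes q2: "2 \<le> q" and part: "star_partition q R C M" and aprim: "A_primitive R C M"
begin

definition Pts :: "('c \<Rightarrow> nat) set" where "Pts = PiE C (\<lambda>_. {..<q})"
definition cell :: "'r \<Rightarrow> ('c \<Rightarrow> nat) set" where "cell r = {x \<in> Pts. in_subcube C M r x}"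
definition supp :: "'c \<Rightarrow> 'r set" where "supp j = {r \<in> R. M r j \<noteq> None}"
definition blk :: "'c \<Rightarrow> nat \<Rightarrow> 'r set" where "blk j v = {r \<in> R. M r j = Some v}"
definition Priv :: "'r set \<Rightarrow> 'c set" where "Priv T = {j \<in> C. supp j \<subseteq> T}"

lemma finR: "finite R" and finC: "finite C" using part by (auto simp: star_partition_def)

lemma ok: "r \<in> R \<Longrightarrow> j \<in> C \<Longrightarrow> M r j = Some a \<Longrightarrow> a < q"
  using part by (auto simp: star_partition_def star_entries_ok_def)

lemma finPts: "finite Pts" unfolding Pts_def using finC by (simp add: finite_PiE)

lemma Pts_lt: "x \<in> Pts \<Longrightarrow> j \<in> C \<Longrightarrow> x j < q" unfolding Pts_def by auto

lemma Pts_upd: "x \<in> Pts \<Longrightarrow> j \<in> C \<Longrightarrow> u < q \<Longrightarrow> x(j:=u) \<in> Pts"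
  unfolding Pts_def by (auto simp: PiE_def extensional_def)

lemma cover: "x \<in> Pts \<Longrightarrow> \<exists>r\<in>R. in_subcube C M r x"
  using part Pts_lt unfolding star_partition_def by metis

lemma uniq: "x \<in> Pts \<Longrightarrow> r \<in> R \<Longrightarrow> r' \<in> R \<Longrightarrow> in_subcube C M r x \<Longrightarrow> in_subcube C M r' x \<Longrightarrow> r = r'"
  using part Pts_lt unfolding star_partition_def by metis

lemma in_sub_upd: "M r j = None \<Longrightarrow> in_subcube C M r (x(j:=u)) \<longleftrightarrow> in_subcube C M r x"
  unfolding in_subcube_def by auto

lemma in_sub_val: "in_subcube C M r x \<Longrightarrow> j \<in> C \<Longrightarrow> M r j = Some a \<Longrightarrow> x j = a"
  unfolding in_subcube_def by force

lemma shift: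
  assumes "x \<in> Pts" "r \<in> R" "in_subcube C M r x" "j \<in> C" "M r j \<noteq> None" "v < q"
    "\<sigma> \<in> R" "in_subcube C M \<sigma> (x(j:=v))"
  shows "M \<sigma> j = Some v"
proof (cases "M \<sigma> j")
  case None
  then have "in_subcube C M \<sigma> x" using assms(8) in_sub_upd by metis
  then have "\<sigma> = r" using uniq assms by blast
  then show ?thesis using None assms(5) by simp
next
  case (Some a)
  then show ?thesis using in_sub_val[OF assms(8) assms(4) Some] by simp
qed

lemma canon: "r \<in> R \<Longrightarrow> \<exists>x\<in>Pts. in_subcube C M r x"
proof -
  assume r: "r \<in> R"
  define x where "x = restrict (\<lambda>j. case M r j of Some a \<Rightarrow> a | None \<Rightarrow> 0) C"
  have "x \<in> Pts" unfolding Pts_def x_def using ok[OF r] q2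
    by (auto split: option.splits)
  moreover have "in_subcube C M r x" unfolding in_subcube_def x_def
    by (auto split: option.splits)
  ultimately show ?thesis by blast
qed

lemma cell_ne: "r \<in> R \<Longrightarrow> cell r \<noteq> {}" using canon unfolding cell_def by auto

lemma cell_disj: "r \<in> R \<Longrightarrow> r' \<in> R \<Longrightarrow> r \<noteq> r' \<Longrightarrow> cell r \<inter> cell r' = {}"
  unfolding cell_def using uniq by blast

lemma blk_ne: assumes "j \<in> C" "v < q" shows "blk j v \<noteq> {}"
proof -
  obtain r where r: "r \<in> R" "M r j \<noteq> None" using aprim assms(1) unfolding A_primitive_def by blast
  obtain x where x: "x \<in> Pts" "in_subcube C M r x" using canon[OF r(1)] by blast
  obtain \<sigma> where s: "\<sigma> \<in> R" "in_subcube C M \<sigma> (x(j:=v))" using cover Pts_upd[OF x(1) assms] by blast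
  have "M \<sigma> j = Some v" using shift[OF x(1) r(1) x(2) assms(1) r(2) assms(2) s] .
  then show ?thesis using s(1) unfolding blk_def by blast
qed

lemma supp_eq: "j \<in> C \<Longrightarrow> supp j = (\<Union>v\<in>{..<q}. blk j v)"
  unfolding supp_def blk_def using ok by fastforce

lemma blk_sub: "blk j v \<subseteq> supp j" unfolding blk_def supp_def by auto

lemma blk_disj: "v \<noteq> w \<Longrightarrow> blk j v \<inter> blk j w = {}" unfolding blk_def by auto

lemma fin_supp: "finite (supp j)" unfolding supp_def using finR by simp
lemma fin_blk: "finite (blk j v)" unfolding blk_def using finR by simp
lemma fin_Priv: "finite (Priv T)" unfolding Priv_def using finC by simp

lemma supp_ne: "j \<in> C \<Longrightarrow> supp j \<noteq> {}" using blk_ne[of j 0] blk_sub q2 by fastforce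

lemma FL:
  fixes F :: "('c \<Rightarrow> nat) \<Rightarrow> real" and \<phi> :: "nat \<Rightarrow> real"
  assumes fX: "finite X" and XP: "X \<subseteq> Pts" and i: "i \<in> C"
    and cyl: "\<forall>x\<in>X. \<forall>u<q. x(i:=u) \<in> X"
    and inv: "\<forall>x\<in>X. \<forall>u<q. F (x(i:=u)) = F x"
  shows "real q * (\<Sum>x\<in>X. F x * \<phi> (x i)) = (\<Sum>x\<in>X. F x) * (\<Sum>u<q. \<phi> u)"
proof -
  define A where "A u = (\<Sum>x\<in>{x\<in>X. x i = u}. F x)" for u
  have A0: "A u = A 0" if u: "u < q" for u
  proof -
    have b: "bij_betw (\<lambda>x. x(i:=u)) {x\<in>X. x i = 0} {x\<in>X. x i = u}"
    proof (rule bij_betw_byWitness[where f' = "\<lambda>x. x(i:=0)"])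
      show "\<forall>a\<in>{x \<in> X. x i = 0}. a(i := u, i := 0) = a" by auto
      show "\<forall>a'\<in>{x \<in> X. x i = u}. a'(i := 0, i := u) = a'" by auto
      show "(\<lambda>x. x(i := u)) ` {x \<in> X. x i = 0} \<subseteq> {x \<in> X. x i = u}" using cyl u by auto
      show "(\<lambda>x. x(i := 0)) ` {x \<in> X. x i = u} \<subseteq> {x \<in> X. x i = 0}" using cyl q2 by auto
    qed
    have "A 0 = (\<Sum>x\<in>{x\<in>X. x i = 0}. F (x(i:=u)))" unfolding A_def
      using inv u by (intro sum.cong) auto
    also have "\<dots> = A u" unfolding A_def by (rule sum.reindex_bij_betw[OF b])
    finally show ?thesis by simp
  qed
  have im: "(\<lambda>x. x i) ` X \<subseteq> {..<q}" using XP Pts_lt i by auto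
  have s1: "(\<Sum>x\<in>X. F x * \<phi> (x i)) = (\<Sum>u<q. \<phi> u * A u)"
  proof -
    have "(\<Sum>x\<in>X. F x * \<phi> (x i)) = (\<Sum>u<q. \<Sum>x\<in>{x\<in>X. x i = u}. F x * \<phi> (x i))"
      by (rule sum.group[OF fX finite_lessThan im, symmetric])
    also have "\<dots> = (\<Sum>u<q. \<phi> u * A u)" unfolding A_def
      by (intro sum.cong refl) (auto simp: sum_distrib_left ac_simps intro!: sum.cong)
    finally show ?thesis .
  qed
  have s2: "(\<Sum>x\<in>X. F x) = (\<Sum>u<q. A u)" unfolding A_def
    by (rule sum.group[OF fX finite_lessThan im, symmetric])
  have s3: "(\<Sum>u<q. \<phi> u * A u) = (\<Sum>u<q. \<phi> u) * A 0"
  proof -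
    have "(\<Sum>u<q. \<phi> u * A u) = (\<Sum>u<q. \<phi> u * A 0)" by (intro sum.cong refl) (metis A0 lessThan_iff)
    then show ?thesis by (simp add: sum_distrib_right)
  qed
  have s4: "(\<Sum>u<q. A u) = real q * A 0"
  proof -
    have "(\<Sum>u<q. A u) = (\<Sum>u<q. A 0)" by (intro sum.cong refl) (metis A0 lessThan_iff)
    then show ?thesis by simp
  qed
  show ?thesis unfolding s1 s2 s3 s4 by (simp add: ac_simps)
qed

end

context SPL begin

lemma SZ:
  fixes g :: "nat \<Rightarrow> real"
  assumes "finite Y" "Y \<subseteq> Pts" "i \<in> C" "\<forall>y\<in>Y. \<forall>u<q. y(i:=u) \<in> Y" "(\<Sum>u<q. g u) = 0"
  shows "(\<Sum>y\<in>Y. g (y i)) = 0"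
proof -
  have "real q * (\<Sum>y\<in>Y. 1 * g (y i)) = (\<Sum>y\<in>Y. 1) * (\<Sum>u<q. g u)"
    by (rule FL) (use assms in auto)
  then show ?thesis using assms(5) q2 by simp
qed

lemma SP:
  fixes g :: "'c \<Rightarrow> nat \<Rightarrow> real"
  assumes fY: "finite Y" and YP: "Y \<subseteq> Pts" and L: "L' \<subseteq> C" "finite L'"
    and cyl: "\<forall>y\<in>Y. \<forall>i\<in>L'. \<forall>u<q. y(i:=u) \<in> Y"
    and zm: "\<forall>i\<in>L'. (\<Sum>u<q. g i u) = 0" and i0: "i0 \<in> L'"
  shows "real q * (\<Sum>y\<in>Y. (\<Sum>i\<in>L'. g i (y i)) * g i0 (y i0))
        = real (card Y) * (\<Sum>u<q. (g i0 u)^2)"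
proof -
  have each: "real q * (\<Sum>y\<in>Y. g i (y i) * g i0 (y i0))
      = (if i = i0 then real (card Y) * (\<Sum>u<q. (g i0 u)^2) else 0)" if i: "i \<in> L'" for i
  proof (cases "i = i0")
    case True
    have "real q * (\<Sum>y\<in>Y. 1 * (g i0 (y i0))^2) = (\<Sum>y\<in>Y. 1) * (\<Sum>u<q. (g i0 u)^2)"
      by (rule FL) (use assms in auto)
    then show ?thesis using True by (simp add: power2_eq_square)
  next
    case False
    have "real q * (\<Sum>y\<in>Y. g i (y i) * g i0 (y i0)) = (\<Sum>y\<in>Y. g i (y i)) * (\<Sum>u<q. g i0 u)"
      by (rule FL) (use assms False in auto)
    then show ?thesis using False zm i0 by simp
  qed
  have "real q * (\<Sum>y\<in>Y. (\<Sum>i\<in>L'. g i (y i)) * g i0 (y i0))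
      = (\<Sum>i\<in>L'. real q * (\<Sum>y\<in>Y. g i (y i) * g i0 (y i0)))"
    by (simp add: sum_distrib_left sum_distrib_right sum.swap[of _ Y L'])
  also have "\<dots> = (\<Sum>i\<in>L'. (if i = i0 then real (card Y) * (\<Sum>u<q. (g i0 u)^2) else 0))"
    using each by (intro sum.cong refl) auto
  also have "\<dots> = real (card Y) * (\<Sum>u<q. (g i0 u)^2)"
    using i0 L(2) by (simp add: sum.delta)
  finally show ?thesis .
qed

end

context SPL begin

lemma cell_sub: "cell r \<subseteq> Pts" unfolding cell_def by auto
lemma fin_cell: "finite (cell r)" using finite_subset[OF cell_sub finPts] .

lemma cell_cyl: "x \<in> cell r \<Longrightarrow> i \<in> C \<Longrightarrow> M r i = None \<Longrightarrow> u < q \<Longrightarrow> x(i:=u) \<in> cell r"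
  unfolding cell_def using Pts_upd in_sub_upd by auto

lemma G:
  assumes T: "T \<subseteq> R" "T \<noteq> {}" and L: "L \<subseteq> C"
    and cyl: "\<forall>x\<in>(\<Union>r\<in>T. cell r). \<forall>i\<in>L. \<forall>u<q. x(i:=u) \<in> (\<Union>r\<in>T. cell r)"
    and fx: "\<forall>i\<in>L. \<exists>r\<in>T. M r i \<noteq> None"
  shows "(q - 1) * card L + 1 \<le> card T"
proof -
  have fT: "finite T" using finite_subset[OF T(1) finR] .
  have fL: "finite L" using finite_subset[OF L finC] .
  define K where "K = insert None (Some ` (L \<times> {1..<q}))"
  have fK: "finite K" unfolding K_def using fL by simp
  have cK: "card K = card L * (q - 1) + 1"
  proof -
    have "card (Some ` (L \<times> {1..<q})) = card L * (q - 1)"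
      by (simp add: card_image card_cartesian_product)
    moreover have "None \<notin> Some ` (L \<times> {1..<q})" by auto
    ultimately show ?thesis unfolding K_def using fL by simp
  qed
  define \<phi> :: "('c \<times> nat) option \<Rightarrow> 'r \<Rightarrow> real" where
    "\<phi> k r = (if r \<in> T then (case k of None \<Rightarrow> 1
        | Some (i, v) \<Rightarrow> (if M r i = Some v then 1 else 0) - (if M r i = Some 0 then 1 else 0)) else 0)"
    for k r
  have "card K \<le> card T"
  proof (rule dim_bound[OF fT fK])
    show "\<And>k x. k \<in> K \<Longrightarrow> x \<notin> T \<Longrightarrow> \<phi> k x = 0" by (simp add: \<phi>_def)
  next
    fix \<mu> :: "('c \<times> nat) option \<Rightarrow> real"
    assume H0: "\<forall>r\<in>T. (\<Sum>k\<in>K. \<mu> k * \<phi> k r) = 0"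
    define lam where "lam = \<mu> None"
    define g where "g i u = (if u = 0 then - (\<Sum>v\<in>{1..<q}. \<mu> (Some (i, v))) else \<mu> (Some (i, u)))" for i u
    define Gr where "Gr r i = (case M r i of None \<Rightarrow> 0 | Some u \<Rightarrow> g i u)" for r i
    have zm: "(\<Sum>u<q. g i u) = 0" for i
    proof -
      have "{..<q} = insert 0 {1..<q}" using q2 by auto
      then have "(\<Sum>u<q. g i u) = g i 0 + (\<Sum>u\<in>{1..<q}. g i u)" by simp
      also have "(\<Sum>u\<in>{1..<q}. g i u) = (\<Sum>v\<in>{1..<q}. \<mu> (Some (i, v)))"
        by (intro sum.cong refl) (auto simp: g_def)
      finally show ?thesis by (simp add: g_def)
    qed
    have E1: "(\<Sum>k\<in>K. \<mu> k * \<phi> k r) = lam + (\<Sum>i\<in>L. Gr r i)" if r: "r \<in> T" for r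
    proof -
      have "(\<Sum>k\<in>K. \<mu> k * \<phi> k r) = \<mu> None * \<phi> None r + (\<Sum>k\<in>Some ` (L \<times> {1..<q}). \<mu> k * \<phi> k r)"
        unfolding K_def using fL by (subst sum.insert) auto
      also have "(\<Sum>k\<in>Some ` (L \<times> {1..<q}). \<mu> k * \<phi> k r)
          = (\<Sum>p\<in>L \<times> {1..<q}. \<mu> (Some p) * \<phi> (Some p) r)"
        by (subst sum.reindex) auto
      also have "\<dots> = (\<Sum>i\<in>L. \<Sum>v\<in>{1..<q}. \<mu> (Some (i,v)) * \<phi> (Some (i,v)) r)"
        by (subst sum.cartesian_product) (simp add: split_def)
      also have "\<dots> = (\<Sum>i\<in>L. Gr r i)"
      proof (rule sum.cong[OF refl])
        fix i assume i: "i \<in> L"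
        show "(\<Sum>v\<in>{1..<q}. \<mu> (Some (i,v)) * \<phi> (Some (i,v)) r) = Gr r i"
        proof (cases "M r i")
          case None
          then show ?thesis by (simp add: \<phi>_def Gr_def r)
        next
          case (Some u)
          have uq: "u < q" using ok[OF _ _ Some] r T(1) i L by auto
          show ?thesis
          proof (cases "u = 0")
            case True
            then show ?thesis using Some by (simp add: \<phi>_def Gr_def r g_def sum_negf)
          next
            case False
            have "(\<Sum>v\<in>{1..<q}. \<mu> (Some (i,v)) * \<phi> (Some (i,v)) r)
                = (\<Sum>v\<in>{1..<q}. (if v = u then \<mu> (Some (i,v)) else 0))"
              using Some False by (intro sum.cong refl) (auto simp: \<phi>_def r)
            also have "\<dots> = \<mu> (Some (i,u))" using False uq by (simp add: sum.delta')
            finally show ?thesis using Some False by (simp add: Gr_def g_def)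
          qed
        qed
      qed
      finally show ?thesis by (simp add: \<phi>_def r lam_def)
    qed
    have H: "lam + (\<Sum>i\<in>L. Gr r i) = 0" if "r \<in> T" for r using H0 E1 that by simp
    define X where "X = (\<Union>r\<in>T. cell r)"
    have fX: "finite X" unfolding X_def using fT fin_cell by simp
    have XP: "X \<subseteq> Pts" unfolding X_def using cell_sub by auto
    have cylX: "\<forall>x\<in>X. \<forall>i\<in>L. \<forall>u<q. x(i:=u) \<in> X" using cyl unfolding X_def .
    define h where "h x = lam + (\<Sum>i\<in>L. g i (x i))" for x
    have key: "\<forall>u<q. g i0 u = 0" if i0: "i0 \<in> L" for i0
    proof -
      define \<Gamma> where "\<Gamma> = (\<Sum>u<q. (g i0 u)^2)"
      have \<Gamma>0: "\<Gamma> \<ge> 0" unfolding \<Gamma>_def by (simp add: sum_nonneg)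
      have A: "real q * (\<Sum>x\<in>X. h x * g i0 (x i0)) = real (card X) * \<Gamma>"
      proof -
        have "real q * (\<Sum>x\<in>X. h x * g i0 (x i0))
            = lam * (real q * (\<Sum>x\<in>X. g i0 (x i0)))
              + real q * (\<Sum>x\<in>X. (\<Sum>i\<in>L. g i (x i)) * g i0 (x i0))"
          unfolding h_def by (simp add: algebra_simps sum.distrib sum_distrib_left)
        also have "(\<Sum>x\<in>X. g i0 (x i0)) = 0"
          by (rule SZ) (use fX XP cylX i0 L zm in auto)
        also have "real q * (\<Sum>x\<in>X. (\<Sum>i\<in>L. g i (x i)) * g i0 (x i0)) = real (card X) * \<Gamma>"
          unfolding \<Gamma>_def by (rule SP) (use fX XP cylX i0 L fL zm in auto)
        finally show ?thesis by simp
      qed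
      have B: "real q * (\<Sum>x\<in>cell r. h x * g i0 (x i0))
          = (if M r i0 = None then real (card (cell r)) * \<Gamma> else 0)" if r: "r \<in> T" for r
      proof -
        define Lf where "Lf = {i\<in>L. M r i = None}"
        have fLf: "finite Lf" unfolding Lf_def using fL by simp
        have hx: "h x = (\<Sum>i\<in>Lf. g i (x i))" if x: "x \<in> cell r" for x
        proof -
          have "\<forall>i\<in>L. g i (x i) = Gr r i + (if M r i = None then g i (x i) else 0)"
          proof
            fix i assume i: "i \<in> L"
            show "g i (x i) = Gr r i + (if M r i = None then g i (x i) else 0)"
            proof (cases "M r i")
              case None then show ?thesis by (simp add: Gr_def)
            next
              case (Some a)
              have "x i = a" using in_sub_val[OF _ _ Some] x i L unfolding cell_def by auto
              then show ?thesis using Some by (simp add: Gr_def)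
            qed
          qed
          then have "(\<Sum>i\<in>L. g i (x i)) = (\<Sum>i\<in>L. Gr r i) + (\<Sum>i\<in>L. if M r i = None then g i (x i) else 0)"
            by (simp add: sum.distrib[symmetric])
          also have "(\<Sum>i\<in>L. if M r i = None then g i (x i) else 0) = (\<Sum>i\<in>Lf. g i (x i))"
            unfolding Lf_def using fL by (simp add: sum.inter_filter)
          finally show ?thesis unfolding h_def using H[OF r] by simp
        qed
        have cylc: "\<forall>y\<in>cell r. \<forall>i\<in>Lf. \<forall>u<q. y(i:=u) \<in> cell r"
          unfolding Lf_def using cell_cyl L by auto
        have "(\<Sum>x\<in>cell r. h x * g i0 (x i0)) = (\<Sum>x\<in>cell r. (\<Sum>i\<in>Lf. g i (x i)) * g i0 (x i0))"
          using hx by simp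
        show ?thesis
        proof (cases "M r i0")
          case None
          then have "i0 \<in> Lf" unfolding Lf_def using i0 by simp
          have "real q * (\<Sum>x\<in>cell r. (\<Sum>i\<in>Lf. g i (x i)) * g i0 (x i0)) = real (card (cell r)) * \<Gamma>"
            unfolding \<Gamma>_def by (rule SP) (use fin_cell cell_sub cylc \<open>i0 \<in> Lf\<close> Lf_def L fLf zm in auto)
          then show ?thesis using None hx by simp
        next
          case (Some a)
          have gx: "g i0 (x i0) = g i0 a" if "x \<in> cell r" for x
            using in_sub_val[OF _ _ Some] that i0 L unfolding cell_def by auto
          have "(\<Sum>x\<in>cell r. h x * g i0 (x i0)) = g i0 a * (\<Sum>i\<in>Lf. \<Sum>x\<in>cell r. g i (x i))"
            using hx gx by (simp add: sum_distrib_left sum_distrib_right sum.swap[of _ "cell r" Lf] ac_simps)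
          also have "(\<Sum>i\<in>Lf. \<Sum>x\<in>cell r. g i (x i)) = 0"
          proof (rule sum.neutral, rule ballI)
            fix i assume "i \<in> Lf"
            then show "(\<Sum>x\<in>cell r. g i (x i)) = 0"
              by (intro SZ) (use fin_cell cell_sub cylc Lf_def L zm in auto)
          qed
          finally show ?thesis using Some by simp
        qed
      qed
      have disj: "\<forall>r\<in>T. \<forall>r'\<in>T. r \<noteq> r' \<longrightarrow> cell r \<inter> cell r' = {}"
        using cell_disj T(1) by blast
      have sX: "(\<Sum>x\<in>X. f x) = (\<Sum>r\<in>T. \<Sum>x\<in>cell r. f x)" for f :: "('c \<Rightarrow> nat) \<Rightarrow> real"
        unfolding X_def by (rule sum.UNION_disjoint) (use fT fin_cell disj in auto)
      have cX: "real (card X) = (\<Sum>r\<in>T. real (card (cell r)))"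
        using sX[of "\<lambda>_. 1"] by simp
      have "(\<Sum>r\<in>T. real (card (cell r)) * \<Gamma>)
          = (\<Sum>r\<in>T. (if M r i0 = None then real (card (cell r)) * \<Gamma> else 0))"
      proof -
        have "(\<Sum>r\<in>T. real (card (cell r)) * \<Gamma>) = real q * (\<Sum>x\<in>X. h x * g i0 (x i0))"
          using A cX by (simp add: sum_distrib_right)
        also have "\<dots> = (\<Sum>r\<in>T. real q * (\<Sum>x\<in>cell r. h x * g i0 (x i0)))"
          using sX by (simp add: sum_distrib_left)
        also have "\<dots> = (\<Sum>r\<in>T. (if M r i0 = None then real (card (cell r)) * \<Gamma> else 0))"
          using B by simp
        finally show ?thesis .
      qed
      then have "(\<Sum>r\<in>T. (if M r i0 = None then 0 else real (card (cell r)) * \<Gamma>)) = 0"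
      proof -
        assume e: "(\<Sum>r\<in>T. real (card (cell r)) * \<Gamma>)
          = (\<Sum>r\<in>T. (if M r i0 = None then real (card (cell r)) * \<Gamma> else 0))"
        have "(\<Sum>r\<in>T. real (card (cell r)) * \<Gamma>)
           = (\<Sum>r\<in>T. (if M r i0 = None then real (card (cell r)) * \<Gamma> else 0))
             + (\<Sum>r\<in>T. (if M r i0 = None then 0 else real (card (cell r)) * \<Gamma>))"
          by (simp add: sum.distrib[symmetric]) (intro sum.cong refl, auto)
        then show ?thesis using e by simp
      qed
      then have z: "\<forall>r\<in>T. (if M r i0 = None then 0 else real (card (cell r)) * \<Gamma>) = 0"
      proof -
        assume s0: "(\<Sum>r\<in>T. (if M r i0 = None then 0 else real (card (cell r)) * \<Gamma>)) = 0"
        define F where "F r = (if M r i0 = None then 0 else real (card (cell r)) * \<Gamma>)" for r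
        have "(\<Sum>r\<in>T. F r) = 0 \<longleftrightarrow> (\<forall>r\<in>T. F r = 0)"
          by (rule sum_nonneg_eq_0_iff[OF fT]) (use \<Gamma>0 in \<open>simp add: F_def\<close>)
        then show ?thesis using s0 unfolding F_def by blast
      qed
      obtain r0 where r0: "r0 \<in> T" "M r0 i0 \<noteq> None" using fx i0 by blast
      have "card (cell r0) > 0" using cell_ne[of r0] r0 T(1) fin_cell by (auto simp: card_gt_0_iff)
      then have "\<Gamma> = 0" using z r0 by auto
      then have "\<forall>u\<in>{..<q}. (g i0 u)^2 = 0"
        unfolding \<Gamma>_def by (subst sum_nonneg_eq_0_iff[symmetric]) auto
      then show ?thesis by simp
    qed
    have mu_some: "\<mu> (Some (i, v)) = 0" if "i \<in> L" "v \<in> {1..<q}" for i v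
      using key[OF that(1)] that(2) by (auto simp: g_def split: if_splits)
    obtain r1 where r1: "r1 \<in> T" using T(2) by blast
    have "\<forall>i\<in>L. Gr r1 i = 0"
    proof
      fix i assume i: "i \<in> L"
      show "Gr r1 i = 0"
      proof (cases "M r1 i")
        case None then show ?thesis by (simp add: Gr_def)
      next
        case (Some a)
        then have "a < q" using ok r1 T(1) i L by blast
        then show ?thesis using key[OF i] Some by (simp add: Gr_def)
      qed
    qed
    then have "lam = 0" using H[OF r1] by simp
    then show "\<forall>k\<in>K. \<mu> k = 0" using mu_some unfolding K_def lam_def by auto
  qed
  then show ?thesis using cK by (simp add: mult.commute)
qed

end

context SPL begin

lemma LemC:
  assumes T: "T \<subseteq> R" "T \<noteq> {}"
  shows "(q - 1) * card (Priv T) + 1 \<le> card T"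
proof (rule G[OF T])
  show "Priv T \<subseteq> C" unfolding Priv_def by auto
  show "\<forall>i\<in>Priv T. \<exists>r\<in>T. M r i \<noteq> None"
  proof
    fix i assume i: "i \<in> Priv T"
    then have "i \<in> C" "supp i \<subseteq> T" unfolding Priv_def by auto
    with supp_ne[of i] show "\<exists>r\<in>T. M r i \<noteq> None" unfolding supp_def by blast
  qed
  show "\<forall>x\<in>(\<Union>r\<in>T. cell r). \<forall>i\<in>Priv T. \<forall>u<q. x(i:=u) \<in> (\<Union>r\<in>T. cell r)"
  proof (intro ballI allI impI)
    fix x i u assume x: "x \<in> (\<Union>r\<in>T. cell r)" and i: "i \<in> Priv T" and u: "u < q"
    obtain r where r: "r \<in> T" "x \<in> cell r" using x by blast
    have iC: "i \<in> C" and si: "supp i \<subseteq> T" using i unfolding Priv_def by auto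
    have xP: "x \<in> Pts" and xr: "in_subcube C M r x" using r unfolding cell_def by auto
    have yP: "x(i:=u) \<in> Pts" using Pts_upd[OF xP iC u] .
    obtain \<sigma> where s: "\<sigma> \<in> R" "in_subcube C M \<sigma> (x(i:=u))" using cover[OF yP] by blast
    show "x(i:=u) \<in> (\<Union>r\<in>T. cell r)"
    proof (cases "\<sigma> \<in> T")
      case True then show ?thesis using s yP unfolding cell_def by blast
    next
      case False
      then have "M \<sigma> i = None" using si s(1) unfolding supp_def by auto
      then have "in_subcube C M \<sigma> x" using s(2) in_sub_upd by metis
      then have "\<sigma> = r" using uniq[OF xP s(1) _ _ xr] r T(1) by blast
      then show ?thesis using False r by simp
    qed
  qed
qed

lemma LemX:
  assumes j: "j1 \<in> C" "j2 \<in> C" "j1 \<noteq> j2" and v: "v' < q" "v < q"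
    and ne: "blk j1 v \<noteq> {}"
    and star: "\<forall>r\<in>blk j1 v'. M r j2 = None"
    and val: "\<forall>r\<in>blk j1 v. M r j2 = Some w"
  shows False
proof -
  obtain r where r: "r \<in> blk j1 v" using ne by blast
  then have rR: "r \<in> R" and rv: "M r j1 = Some v" unfolding blk_def by auto
  obtain x where x: "x \<in> Pts" "in_subcube C M r x" using canon[OF rR] by blast
  have x1P: "x(j1:=v') \<in> Pts" using Pts_upd[OF x(1) j(1) v(1)] .
  obtain \<rho> where \<rho>: "\<rho> \<in> R" "in_subcube C M \<rho> (x(j1:=v'))" using cover[OF x1P] by blast
  have "M \<rho> j1 = Some v'" using shift[OF x(1) rR x(2) j(1) _ v(1) \<rho>] rv by simp
  then have "\<rho> \<in> blk j1 v'" using \<rho>(1) unfolding blk_def by simp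
  then have \<rho>2: "M \<rho> j2 = None" using star by blast
  define w' where "w' = (if w = 0 then 1 else (0::nat))"
  have w': "w' < q" "w' \<noteq> w" unfolding w'_def using q2 by auto
  have x2P: "x(j1:=v', j2:=w') \<in> Pts" using Pts_upd[OF x1P j(2) w'(1)] .
  have x2: "in_subcube C M \<rho> (x(j1:=v', j2:=w'))" using \<rho>(2) in_sub_upd[OF \<rho>2] by metis
  have yeq: "x(j1:=v', j2:=w', j1:=v) = x(j1:=v, j2:=w')" using j(3) by (auto simp: fun_eq_iff)
  have yP: "x(j1:=v', j2:=w', j1:=v) \<in> Pts" using Pts_upd[OF x2P j(1) v(2)] .
  obtain \<sigma> where \<sigma>: "\<sigma> \<in> R" "in_subcube C M \<sigma> (x(j1:=v', j2:=w', j1:=v))" using cover[OF yP] by blast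
  have "M \<sigma> j1 = Some v"
    using shift[OF x2P \<rho>(1) x2 j(1) _ v(2) \<sigma>] \<open>M \<rho> j1 = Some v'\<close> by simp
  then have "\<sigma> \<in> blk j1 v" using \<sigma>(1) unfolding blk_def by simp
  then have "M \<sigma> j2 = Some w" using val by blast
  then have "(x(j1:=v', j2:=w', j1:=v)) j2 = w" using in_sub_val[OF \<sigma>(2) j(2)] by simp
  then show False using w' j(3) by simp
qed

lemma blk_cyl:
  assumes c: "c \<in> C" and b: "b < q" and i: "i \<in> C" "i \<noteq> c" and a: "a < q" and ia: "supp i \<inter> blk c a = {}"
    and x: "x \<in> cell r" and r: "r \<in> blk c b" and u: "u < q"
  shows "x(i:=u) \<in> (\<Union>r\<in>blk c b. cell r)"
proof -
  have rR: "r \<in> R" and rb: "M r c = Some b" using r unfolding blk_def by auto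
  have xP: "x \<in> Pts" and xr: "in_subcube C M r x" using x unfolding cell_def by auto
  have xc: "x c = b" using in_sub_val[OF xr c rb] .
  have x1P: "x(c:=a) \<in> Pts" using Pts_upd[OF xP c a] .
  obtain \<rho> where \<rho>: "\<rho> \<in> R" "in_subcube C M \<rho> (x(c:=a))" using cover[OF x1P] by blast
  have \<rho>a: "M \<rho> c = Some a" using shift[OF xP rR xr c _ a \<rho>] rb by simp
  then have "\<rho> \<in> blk c a" using \<rho>(1) unfolding blk_def by simp
  then have \<rho>i: "M \<rho> i = None" using ia \<rho>(1) unfolding supp_def by auto
  have x2P: "x(c:=a, i:=u) \<in> Pts" using Pts_upd[OF x1P i(1) u] .
  have x2: "in_subcube C M \<rho> (x(c:=a, i:=u))" using \<rho>(2) in_sub_upd[OF \<rho>i] by metis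
  have yeq: "x(c:=a, i:=u, c:=b) = x(i:=u)" using i(2) xc by (auto simp: fun_eq_iff)
  have yP: "x(c:=a, i:=u, c:=b) \<in> Pts" using Pts_upd[OF x2P c b] .
  obtain \<sigma> where \<sigma>: "\<sigma> \<in> R" "in_subcube C M \<sigma> (x(c:=a, i:=u, c:=b))" using cover[OF yP] by blast
  have "M \<sigma> c = Some b" using shift[OF x2P \<rho>(1) x2 c _ b \<sigma>] \<rho>a by simp
  then have "\<sigma> \<in> blk c b" using \<sigma>(1) unfolding blk_def by simp
  moreover have "x(i:=u) \<in> cell \<sigma>" using \<sigma> yP yeq unfolding cell_def by simp
  ultimately show ?thesis by blast
qed

lemma card_supp: "c \<in> C \<Longrightarrow> card (supp c) = (\<Sum>a<q. card (blk c a))"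
  unfolding supp_eq by (rule card_UN_disjoint) (auto simp: fin_blk blk_disj)

end

locale SPN = SPL q R C M for q :: nat and R :: "'r set" and C :: "'c set" and M +
  assumes nonexp: "\<not> expandable q R C M"
begin

definition J where
  "J c a = {j \<in> C - {c}. supp j \<subseteq> supp c - blk c a}"

lemma NE:
  assumes c: "c \<in> C" and a: "a < q"
  shows "card (blk c a) \<le> 1 + card (J c a)"
proof -
  have mem: "(r,k) \<in> bang_rows q R M c a \<longleftrightarrow> r \<in> R \<and> (M r c = None \<and> k = 0 \<or> M r c = Some a \<and> k < q)" for r k
    unfolding bang_rows_def by auto
  have entL: "bang_ent M c a rk (Inl j) = M (fst rk) j" for rk j by (simp add: bang_ent_def)
  have entR: "bang_ent M c a rk (Inr r) = (if fst rk = r \<and> M r c = Some a then Some (snd rk) else None)" for rk r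
    by (simp add: bang_ent_def)
  have exL: "(\<exists>rk\<in>bang_rows q R M c a. bang_ent M c a rk (Inl j) \<noteq> None)
          \<longleftrightarrow> (\<exists>r\<in>R. (M r c = None \<or> M r c = Some a) \<and> M r j \<noteq> None)" for j
  proof
    assume "\<exists>rk\<in>bang_rows q R M c a. bang_ent M c a rk (Inl j) \<noteq> None"
    then obtain r k where "(r,k) \<in> bang_rows q R M c a" "M r j \<noteq> None" unfolding entL by auto
    then show "\<exists>r\<in>R. (M r c = None \<or> M r c = Some a) \<and> M r j \<noteq> None" unfolding mem by blast
  next
    assume "\<exists>r\<in>R. (M r c = None \<or> M r c = Some a) \<and> M r j \<noteq> None"
    then obtain r where r: "r \<in> R" "M r c = None \<or> M r c = Some a" "M r j \<noteq> None" by blast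
    then have "(r,0) \<in> bang_rows q R M c a" unfolding mem using q2 by auto
    then show "\<exists>rk\<in>bang_rows q R M c a. bang_ent M c a rk (Inl j) \<noteq> None" using r(3) unfolding entL by force
  qed
  have exR: "(\<exists>rk\<in>bang_rows q R M c a. bang_ent M c a rk (Inr r) \<noteq> None) \<longleftrightarrow> r \<in> blk c a" for r
  proof
    assume "\<exists>rk\<in>bang_rows q R M c a. bang_ent M c a rk (Inr r) \<noteq> None"
    then obtain r' k where "(r',k) \<in> bang_rows q R M c a" "bang_ent M c a (r',k) (Inr r) \<noteq> None" by auto
    then show "r \<in> blk c a" unfolding mem entR blk_def by (auto split: if_splits)
  next
    assume r: "r \<in> blk c a"
    then have "(r,0) \<in> bang_rows q R M c a" unfolding mem blk_def using q2 by auto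
    moreover have "bang_ent M c a (r,0) (Inr r) \<noteq> None" using r unfolding entR blk_def by auto
    ultimately show "\<exists>rk\<in>bang_rows q R M c a. bang_ent M c a rk (Inr r) \<noteq> None" by blast
  qed
  have notJ: "j \<in> C - {c} - J c a \<longleftrightarrow> j \<in> C - {c} \<and> (\<exists>r\<in>R. (M r c = None \<or> M r c = Some a) \<and> M r j \<noteq> None)" for j
    unfolding J_def supp_def blk_def by auto
  have eq: "bang_cols q R C M c a = Inl ` (C - {c} - J c a) \<union> Inr ` blk c a"
  proof (rule set_eqI)
    fix col :: "'c + 'r"
    show "col \<in> bang_cols q R C M c a \<longleftrightarrow> col \<in> Inl ` (C - {c} - J c a) \<union> Inr ` blk c a"
    proof (cases col)
      case (Inl j)
      show ?thesis unfolding Inl bang_cols_def using exL[of j] notJ[of j] by auto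
    next
      case (Inr r)
      have "r \<in> blk c a \<Longrightarrow> r \<in> R \<and> M r c = Some a" unfolding blk_def by auto
      then show ?thesis unfolding Inr bang_cols_def using exR[of r] by (auto simp: blk_def)
    qed
  qed
  have JC: "J c a \<subseteq> C - {c}" unfolding J_def by auto
  have "card (bang_cols q R C M c a) = card (C - {c} - J c a) + card (blk c a)"
    unfolding eq by (subst card_Un_disjoint) (auto simp: card_image finC fin_blk)
  also have "card (C - {c} - J c a) = card C - 1 - card (J c a)"
    using JC c finC by (simp add: card_Diff_subset finite_subset)
  finally have e: "card (bang_cols q R C M c a) = card C - 1 - card (J c a) + card (blk c a)" .
  have "card (bang_cols q R C M c a) \<le> card C" using nonexp c a unfolding expandable_def by (meson not_less)
  moreover have "card (J c a) \<le> card C - 1" using card_mono[OF _ JC] finC c by simp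
  moreover have "card C \<ge> 1" using c finC by (metis One_nat_def Suc_leI card_gt_0_iff empty_iff)
  ultimately show ?thesis using e by linarith
qed

end

lemma sum_le_eq_nat:
  fixes f g :: "'a \<Rightarrow> nat"
  assumes "finite A" "\<forall>x\<in>A. f x \<le> g x" "sum g A \<le> sum f A"
  shows "\<forall>x\<in>A. f x = g x"
proof (rule ccontr)
  assume "\<not> (\<forall>x\<in>A. f x = g x)"
  then obtain x where "x \<in> A" "f x < g x" using assms(2) by force
  then have "sum f A < sum g A" using sum_strict_mono_ex1[OF assms(1)] assms(2) by blast
  then show False using assms(3) by simp
qed

context SPN begin

lemma other_val: "a < q \<Longrightarrow> \<exists>a'<q. a' \<noteq> a"
  using q2 by (intro exI[of _ "if a = 0 then 1 else 0"]) auto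

lemma c_notin_Priv_blk: "c \<in> C \<Longrightarrow> a < q \<Longrightarrow> c \<notin> Priv (blk c a)"
proof
  assume c: "c \<in> C" and a: "a < q" and "c \<in> Priv (blk c a)"
  then have s: "supp c \<subseteq> blk c a" unfolding Priv_def by auto
  obtain a' where a': "a' < q" "a' \<noteq> a" using other_val[OF a] by blast
  have "blk c a' \<subseteq> blk c a" using s blk_sub[of c a'] by auto
  then show False using blk_ne[OF c a'(1)] blk_disj[OF a'(2), of c] by auto
qed

lemma Priv_blk_disj: "a \<noteq> b \<Longrightarrow> Priv (blk c a) \<inter> Priv (blk c b) = {}"
proof (rule ccontr)
  assume ab: "a \<noteq> b" and "Priv (blk c a) \<inter> Priv (blk c b) \<noteq> {}"
  then obtain j where "j \<in> C" "supp j \<subseteq> blk c a" "supp j \<subseteq> blk c b" unfolding Priv_def by auto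
  then show False using supp_ne[of j] blk_disj[OF ab, of c] by auto
qed

lemma struct:
  assumes c: "c \<in> C"
  shows "\<exists>l. (\<forall>a<q. card (Priv (blk c a)) = l \<and> card (blk c a) = 1 + (q - 1) * l)
           \<and> Priv (supp c) = insert c (\<Union>a<q. Priv (blk c a))"
proof -
  obtain p where qp: "q = Suc p" using q2 by (cases q) auto
  have p1: "p \<ge> 1" using q2 qp by simp
  define J' where "J' = {j \<in> C - {c}. supp j \<subseteq> supp c \<and> (\<exists>a<q. supp j \<inter> blk c a = {})}"
  define Lb where "Lb b = {j \<in> J'. supp j \<inter> blk c b \<noteq> {}}" for b
  have fJ': "finite J'" unfolding J'_def using finC by simp
  have Jeq: "J c a = {j\<in>J'. supp j \<inter> blk c a = {}}" if a: "a < q" for a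
    unfolding J_def J'_def using a by auto
  have cJL: "card (J c a) + card (Lb a) = card J'" if a: "a < q" for a
  proof -
    have "J' = J c a \<union> Lb a" "J c a \<inter> Lb a = {}" unfolding Jeq[OF a] Lb_def by auto
    then show ?thesis using fJ' by (metis card_Un_disjoint finite_Un)
  qed
  have Ga: "(q - 1) * card (Lb a) + 1 \<le> card (blk c a)" if a: "a < q" for a
  proof (rule G)
    show "blk c a \<subseteq> R" unfolding blk_def by auto
    show "blk c a \<noteq> {}" using blk_ne[OF c a] .
    show "Lb a \<subseteq> C" unfolding Lb_def J'_def by auto
    show "\<forall>i\<in>Lb a. \<exists>r\<in>blk c a. M r i \<noteq> None" unfolding Lb_def supp_def by auto
    show "\<forall>x\<in>(\<Union>r\<in>blk c a. cell r). \<forall>i\<in>Lb a. \<forall>u<q. x(i:=u) \<in> (\<Union>r\<in>blk c a. cell r)"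
    proof (intro ballI allI impI)
      fix x i u assume x: "x \<in> (\<Union>r\<in>blk c a. cell r)" and i: "i \<in> Lb a" and u: "u < q"
      obtain r where r: "r \<in> blk c a" "x \<in> cell r" using x by blast
      obtain a' where a': "a' < q" "supp i \<inter> blk c a' = {}" using i unfolding Lb_def J'_def by auto
      have "i \<in> C" "i \<noteq> c" using i unfolding Lb_def J'_def by auto
      from blk_cyl[OF c a this a' r(2) r(1) u] show "x(i:=u) \<in> (\<Union>r\<in>blk c a. cell r)" .
    qed
  qed
  have qL: "q * card (Lb a) \<le> card J'" if a: "a < q" for a
    using Ga[OF a] NE[OF c a] cJL[OF a] unfolding qp by simp
  define t where "t j = card {a\<in>{..<q}. supp j \<inter> blk c a \<noteq> {}}" for j
  have dc: "(\<Sum>a<q. card (Lb a)) = (\<Sum>j\<in>J'. t j)"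
  proof -
    have "(\<Sum>a<q. card (Lb a)) = (\<Sum>a<q. \<Sum>j\<in>J'. if supp j \<inter> blk c a \<noteq> {} then 1 else 0)"
      unfolding Lb_def using fJ' by (simp add: sum.inter_filter[symmetric])
    also have "\<dots> = (\<Sum>j\<in>J'. \<Sum>a<q. if supp j \<inter> blk c a \<noteq> {} then 1 else 0)" by (rule sum.swap)
    also have "\<dots> = (\<Sum>j\<in>J'. t j)" unfolding t_def by (simp add: sum.inter_filter[symmetric])
    finally show ?thesis .
  qed
  have t1: "1 \<le> t j" if j: "j \<in> J'" for j
  proof -
    have jC: "j \<in> C" using j unfolding J'_def by auto
    obtain r where r: "r \<in> supp j" using supp_ne[OF jC] by blast
    then have "r \<in> supp c" using j unfolding J'_def by auto
    then obtain a where a: "a < q" "r \<in> blk c a" using supp_eq[OF c] by auto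
    then have "a \<in> {a\<in>{..<q}. supp j \<inter> blk c a \<noteq> {}}" using r by auto
    moreover have "finite {a\<in>{..<q}. supp j \<inter> blk c a \<noteq> {}}" by simp
    ultimately have "card {a\<in>{..<q}. supp j \<inter> blk c a \<noteq> {}} > 0" by (auto simp: card_gt_0_iff)
    then show ?thesis unfolding t_def by simp
  qed
  have "q * (\<Sum>a<q. card (Lb a)) \<le> q * card J'"
  proof -
    have "q * (\<Sum>a<q. card (Lb a)) = (\<Sum>a<q. q * card (Lb a))" by (simp add: sum_distrib_left)
    also have "\<dots> \<le> (\<Sum>a<q. card J')" by (rule sum_mono) (use qL in auto)
    finally show ?thesis by simp
  qed
  then have sL: "(\<Sum>a<q. card (Lb a)) \<le> card J'" using q2 by simp
  have tall: "\<forall>j\<in>J'. 1 = t j"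
  proof (rule sum_le_eq_nat[OF fJ'])
    show "\<forall>j\<in>J'. 1 \<le> t j" using t1 by blast
    have "sum t J' \<le> card J'" using sL dc by simp
    then show "sum t J' \<le> (\<Sum>j\<in>J'. 1)" by simp
  qed
  have uniq_a: "a1 = a2" if "j \<in> J'" "a1 < q" "a2 < q" "supp j \<inter> blk c a1 \<noteq> {}" "supp j \<inter> blk c a2 \<noteq> {}" for j a1 a2
  proof -
    have "card {a\<in>{..<q}. supp j \<inter> blk c a \<noteq> {}} = 1" using tall that(1) unfolding t_def by auto
    then obtain a0 where e: "{a\<in>{..<q}. supp j \<inter> blk c a \<noteq> {}} = {a0}" by (meson card_1_singletonE)
    have "a1 \<in> {a\<in>{..<q}. supp j \<inter> blk c a \<noteq> {}}" "a2 \<in> {a\<in>{..<q}. supp j \<inter> blk c a \<noteq> {}}"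
      using that by auto
    then show ?thesis unfolding e by simp
  qed
  have sL2: "(\<Sum>a<q. card (Lb a)) = card J'" using dc tall by simp
  have qLeq: "\<forall>a\<in>{..<q}. q * card (Lb a) = card J'"
  proof (rule sum_le_eq_nat)
    show "(\<Sum>a<q. card J') \<le> (\<Sum>a<q. q * card (Lb a))" using sL2 by (simp add: sum_distrib_left[symmetric])
  qed (use qL in auto)
  define l where "l = card (Lb 0)"
  have Lbl: "card (Lb a) = l" if "a < q" for a
  proof -
    have "q * card (Lb a) = q * card (Lb 0)" using qLeq that q2 by auto
    then show ?thesis unfolding l_def using q2 by simp
  qed
  have J'l: "card J' = q * l" using qLeq Lbl[of 0] q2 by auto
  have sa: "card (blk c a) = 1 + (q - 1) * l" if a: "a < q" for a
  proof -
    have "card (J c a) = card J' - l" using cJL[OF a] Lbl[OF a] by simp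
    then have "card (J c a) = p * l" using J'l unfolding qp by simp
    then show ?thesis using Ga[OF a] NE[OF c a] Lbl[OF a] unfolding qp by simp
  qed
  have LbP: "Lb a = Priv (blk c a)" if a: "a < q" for a
  proof
    show "Lb a \<subseteq> Priv (blk c a)"
    proof
      fix j assume j: "j \<in> Lb a"
      have jJ: "j \<in> J'" and jC: "j \<in> C" and ja: "supp j \<inter> blk c a \<noteq> {}" using j unfolding Lb_def J'_def by auto
      have "supp j \<subseteq> blk c a"
      proof
        fix r assume r: "r \<in> supp j"
        then have "r \<in> supp c" using jJ unfolding J'_def by auto
        then obtain a' where a': "a' < q" "r \<in> blk c a'" using supp_eq[OF c] by auto
        then have "a' = a" using uniq_a[OF jJ a'(1) a _ ja] r by blast
        then show "r \<in> blk c a" using a' by simp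
      qed
      then show "j \<in> Priv (blk c a)" unfolding Priv_def using jC by simp
    qed
  next
    show "Priv (blk c a) \<subseteq> Lb a"
    proof
      fix j assume j: "j \<in> Priv (blk c a)"
      have jC: "j \<in> C" and sj: "supp j \<subseteq> blk c a" using j unfolding Priv_def by auto
      have jc: "j \<noteq> c" using c_notin_Priv_blk[OF c a] j by auto
      obtain a' where a': "a' < q" "a' \<noteq> a" using other_val[OF a] by blast
      have "supp j \<inter> blk c a' = {}" using sj blk_disj[OF a'(2), of c] by auto
      moreover have "supp j \<subseteq> supp c" using sj blk_sub by blast
      moreover have "supp j \<inter> blk c a \<noteq> {}" using sj supp_ne[OF jC] by auto
      ultimately show "j \<in> Lb a" unfolding Lb_def J'_def using jC jc a' by auto
    qed
  qed
  define A where "A = insert c (\<Union>a<q. Priv (blk c a))"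
  have AP: "A \<subseteq> Priv (supp c)" unfolding A_def Priv_def using c blk_sub by fastforce
  have cA: "card A = 1 + q * l"
  proof -
    have "card (\<Union>a<q. Priv (blk c a)) = (\<Sum>a<q. card (Priv (blk c a)))"
      by (rule card_UN_disjoint) (auto simp: fin_Priv Priv_blk_disj)
    also have "\<dots> = (\<Sum>a<q. l)" using LbP Lbl by simp
    finally have "card (\<Union>a<q. Priv (blk c a)) = q * l" by simp
    moreover have "c \<notin> (\<Union>a<q. Priv (blk c a))" using c_notin_Priv_blk[OF c] by auto
    moreover have "finite (\<Union>a<q. Priv (blk c a))" by (simp add: fin_Priv)
    ultimately show ?thesis unfolding A_def by simp
  qed
  have "(q - 1) * card (Priv (supp c)) + 1 \<le> card (supp c)"
    using LemC[of "supp c"] supp_ne[OF c] unfolding supp_def by auto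
  also have "card (supp c) = q * (1 + (q - 1) * l)" using card_supp[OF c] sa by simp
  finally have "p * card (Priv (supp c)) + 1 \<le> Suc p * (1 + p * l)" unfolding qp by simp
  then have "p * card (Priv (supp c)) \<le> p * (1 + Suc p * l)" by (simp add: algebra_simps)
  then have "p * card (Priv (supp c)) \<le> p * card A" using cA qp by simp
  then have "card (Priv (supp c)) \<le> card A" using p1 by simp
  then have "A = Priv (supp c)" using AP fin_Priv by (simp add: card_seteq)
  then show ?thesis using sa LbP Lbl unfolding A_def by (intro exI[of _ l]) auto
qed

end

lemma bij_from_inj_card:
  assumes "inj_on f A" "f ` A \<subseteq> B" "finite B" "card A = card B"
  shows "bij_betw f A B"
proof -
  have "card (f ` A) = card B" using card_image[OF assms(1)] assms(4) by simp
  then have "f ` A = B" using card_subset_eq[OF assms(3) assms(2)] by blast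
  then show ?thesis unfolding bij_betw_def using assms(1) by blast
qed

lemma fw_id: "1 \<le> q \<Longrightarrow> (q - 1) * fractal_width q k + 1 = q ^ k"
proof (induction k)
  case 0 then show ?case by simp
next
  case (Suc k)
  obtain p where qp: "q = Suc p" using Suc.prems by (cases q) auto
  have "(q - 1) * fractal_width q (Suc k) + 1 = q + q * ((q - 1) * fractal_width q k)"
    unfolding qp by (simp add: algebra_simps)
  also have "\<dots> = q * ((q - 1) * fractal_width q k + 1)" by (simp add: algebra_simps)
  also have "\<dots> = q ^ Suc k" using Suc by simp
  finally show ?case .
qed

context SPL begin

primrec node :: "'c \<Rightarrow> nat \<Rightarrow> bool" where
  "node j 0 = False"
| "node j (Suc k) = (j \<in> C \<and> Priv (supp j) = insert j (\<Union>v<q. Priv (blk j v)) \<and>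
      (\<forall>v<q. if k = 0 then card (blk j v) = 1 else (\<exists>j'. supp j' = blk j v \<and> node j' k)))"

declare node.simps(2)[simp del]

lemma node_C: "node j k \<Longrightarrow> j \<in> C" by (cases k) (auto simp: node.simps)

lemma node_Priv: "node j (Suc k) \<Longrightarrow> Priv (supp j) = insert j (\<Union>v<q. Priv (blk j v))"
  by (simp add: node.simps(2))

lemma node_one: "node j (Suc 0) \<Longrightarrow> v < q \<Longrightarrow> card (blk j v) = 1"
  by (simp add: node.simps(2))

lemma node_child: assumes "node j (Suc (Suc k))" "v < q"
  shows "\<exists>j'. supp j' = blk j v \<and> node j' (Suc k)"
proof -
  have "\<forall>v<q. if Suc k = 0 then card (blk j v) = 1 else (\<exists>j'. supp j' = blk j v \<and> node j' (Suc k))"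
    using assms(1) unfolding node.simps(2)[of j "Suc k"] by blast
  from this[rule_format, OF assms(2)] show ?thesis by (simp only: nat.distinct(2) if_False)
qed

lemma node_intro1: "j \<in> C \<Longrightarrow> Priv (supp j) = insert j (\<Union>v<q. Priv (blk j v)) \<Longrightarrow>
   (\<forall>v<q. card (blk j v) = 1) \<Longrightarrow> node j (Suc 0)"
  by (simp add: node.simps(2))

lemma node_intro2: "j \<in> C \<Longrightarrow> Priv (supp j) = insert j (\<Union>v<q. Priv (blk j v)) \<Longrightarrow>
   (\<forall>v<q. \<exists>j'. supp j' = blk j v \<and> node j' (Suc k)) \<Longrightarrow> node j (Suc (Suc k))"
  unfolding node.simps(2)[of j "Suc k"] by (simp only: nat.distinct(2) if_False)

lemma Priv_blk_disj': "a \<noteq> b \<Longrightarrow> Priv (blk c a) \<inter> Priv (blk c b) = {}"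
proof (rule ccontr)
  assume ab: "a \<noteq> b" and "Priv (blk c a) \<inter> Priv (blk c b) \<noteq> {}"
  then obtain j where "j \<in> C" "supp j \<subseteq> blk c a" "supp j \<subseteq> blk c b" unfolding Priv_def by auto
  then show False using supp_ne[of j] blk_disj[OF ab, of c] by auto
qed

lemma supp_ge2: "j \<in> C \<Longrightarrow> 2 \<le> card (supp j)"
proof -
  assume j: "j \<in> C"
  have "blk j 0 \<union> blk j 1 \<subseteq> supp j" using blk_sub by auto
  moreover have "card (blk j 0 \<union> blk j 1) = card (blk j 0) + card (blk j 1)"
    by (rule card_Un_disjoint) (auto simp: fin_blk blk_disj)
  moreover have "card (blk j 0) \<ge> 1" "card (blk j 1) \<ge> 1" using blk_ne[OF j] q2 fin_blk
    by (auto simp: Suc_le_eq card_gt_0_iff)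
  ultimately show ?thesis using card_mono[OF fin_supp[of j], of "blk j 0 \<union> blk j 1"] by linarith
qed

lemma Priv_small: "card T \<le> 1 \<Longrightarrow> finite T \<Longrightarrow> Priv T = {}"
proof (rule ccontr)
  assume "card T \<le> 1" "finite T" "Priv T \<noteq> {}"
  then obtain j where "j \<in> C" "supp j \<subseteq> T" unfolding Priv_def by auto
  then have "card (supp j) \<le> card T" using card_mono \<open>finite T\<close> by blast
  then show False using supp_ge2[OF \<open>j \<in> C\<close>] \<open>card T \<le> 1\<close> by linarith
qed

lemma N1: "node j (Suc k) \<Longrightarrow> card (supp j) = q ^ Suc k"
proof (induction k arbitrary: j)
  case 0
  have "\<forall>v<q. card (blk j v) = 1" using node_one[OF 0] by blast
  moreover have "j \<in> C" using node_C[OF 0] .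
  ultimately show ?case using card_supp by simp
next
  case (Suc k)
  have jC: "j \<in> C" using node_C[OF Suc.prems] .
  have ch: "\<forall>v<q. \<exists>j'. supp j' = blk j v \<and> node j' (Suc k)" using node_child[OF Suc.prems] by blast
  have "\<forall>v<q. card (blk j v) = q ^ Suc k"
  proof (intro allI impI)
    fix v assume "v < q"
    then obtain j' where "supp j' = blk j v" "node j' (Suc k)" using ch by blast
    then show "card (blk j v) = q ^ Suc k" using Suc.IH by metis
  qed
  then show ?case using card_supp[OF jC] by simp
qed

lemma N2: "node j (Suc k) \<Longrightarrow> card (Priv (supp j)) = fractal_width q (Suc k)"
proof (induction k arbitrary: j)
  case 0
  have jC: "j \<in> C" using node_C[OF 0] .
  have P: "Priv (supp j) = insert j (\<Union>v<q. Priv (blk j v))" using node_Priv[OF 0] .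
  have b1: "\<forall>v<q. card (blk j v) = 1" using node_one[OF 0] by blast
  have "\<forall>v<q. Priv (blk j v) = {}" using b1 Priv_small fin_blk by simp
  then have "Priv (supp j) = {j}" using P by auto
  then show ?case by simp
next
  case (Suc k)
  have jC: "j \<in> C" using node_C[OF Suc.prems] .
  have P: "Priv (supp j) = insert j (\<Union>v<q. Priv (blk j v))" using node_Priv[OF Suc.prems] .
  have ch: "\<forall>v<q. \<exists>j'. supp j' = blk j v \<and> node j' (Suc k)" using node_child[OF Suc.prems] by blast
  have cv: "\<forall>v<q. card (Priv (blk j v)) = fractal_width q (Suc k)"
  proof (intro allI impI)
    fix v assume "v < q"
    then obtain j' where "supp j' = blk j v" "node j' (Suc k)" using ch by blast
    then show "card (Priv (blk j v)) = fractal_width q (Suc k)" using Suc.IH by metis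
  qed
  have "card (\<Union>v<q. Priv (blk j v)) = (\<Sum>v<q. card (Priv (blk j v)))"
    by (rule card_UN_disjoint) (auto simp: fin_Priv Priv_blk_disj')
  also have "\<dots> = q * fractal_width q (Suc k)" using cv by simp
  finally have cu: "card (\<Union>v<q. Priv (blk j v)) = q * fractal_width q (Suc k)" .
  have "j \<notin> (\<Union>v<q. Priv (blk j v))"
  proof
    assume "j \<in> (\<Union>v<q. Priv (blk j v))"
    then obtain v where v: "v < q" "supp j \<subseteq> blk j v" unfolding Priv_def by auto
    define v' where "v' = (if v = 0 then 1 else (0::nat))"
    have v': "v' < q" "v' \<noteq> v" using q2 by (auto simp: v'_def)
    have "blk j v' \<subseteq> blk j v" using v blk_sub[of j v'] by auto
    then show False using blk_ne[OF jC v'(1)] blk_disj[OF v'(2), of j] by auto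
  qed
  then have "card (Priv (supp j)) = Suc (q * fractal_width q (Suc k))"
    unfolding P using cu by (subst card_insert_disjoint) (auto simp: fin_Priv)
  then show ?case by simp
qed

lemma lam:
  "node j1 (Suc k1) \<Longrightarrow> node j2 (Suc k2) \<Longrightarrow> supp j1 \<inter> supp j2 \<noteq> {} \<Longrightarrow>
   supp j1 \<subseteq> supp j2 \<or> supp j2 \<subseteq> supp j1"
proof (induction "k1 + k2" arbitrary: j1 j2 k1 k2 rule: less_induct)
  case less
  note n1 = less.prems(1) and n2 = less.prems(2) and ov = less.prems(3)
  show ?case
  proof (rule ccontr)
    assume nn: "\<not> (supp j1 \<subseteq> supp j2 \<or> supp j2 \<subseteq> supp j1)"
    have j1C: "j1 \<in> C" using node_C[OF n1] .
    have j2C: "j2 \<in> C" using node_C[OF n2] .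
    have ne: "j1 \<noteq> j2" using nn by auto
    have ch1: "blk j1 v \<subseteq> supp j2" if v: "v < q" "blk j1 v \<inter> supp j2 \<noteq> {}" for v
    proof (cases k1)
      case 0
      then have "card (blk j1 v) = 1" using n1 v(1) node_one by simp
      then obtain r where "blk j1 v = {r}" by (meson card_1_singletonE)
      then show ?thesis using v by auto
    next
      case (Suc k1')
      have n1': "node j1 (Suc (Suc k1'))" using n1 Suc by simp
      obtain j' where j': "supp j' = blk j1 v" "node j' (Suc k1')" using node_child[OF n1' v(1)] by blast
      have "supp j' \<subseteq> supp j2 \<or> supp j2 \<subseteq> supp j'"
        using less.hyps[of k1' k2 j' j2] Suc j'(2) n2 v(2) j'(1) by simp
      moreover have "\<not> supp j2 \<subseteq> supp j'" using nn j'(1) blk_sub[of j1 v] by blast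
      ultimately show ?thesis using j'(1) by simp
    qed
    have ch2: "blk j2 w \<subseteq> supp j1" if w: "w < q" "blk j2 w \<inter> supp j1 \<noteq> {}" for w
    proof (cases k2)
      case 0
      then have "card (blk j2 w) = 1" using n2 w(1) node_one by simp
      then obtain r where "blk j2 w = {r}" by (meson card_1_singletonE)
      then show ?thesis using w by auto
    next
      case (Suc k2')
      have n2': "node j2 (Suc (Suc k2'))" using n2 Suc by simp
      obtain j' where j': "supp j' = blk j2 w" "node j' (Suc k2')" using node_child[OF n2' w(1)] by blast
      have "supp j1 \<subseteq> supp j' \<or> supp j' \<subseteq> supp j1"
        using less.hyps[of k1 k2' j1 j'] Suc j'(2) n1 w(2) j'(1) by (simp add: Int_commute)
      moreover have "\<not> supp j1 \<subseteq> supp j'" using nn j'(1) blk_sub[of j2 w] by blast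
      ultimately show ?thesis using j'(1) by simp
    qed
    obtain r1 where r1: "r1 \<in> supp j1" "r1 \<notin> supp j2" using nn by blast
    then obtain v' where v': "M r1 j1 = Some v'" unfolding supp_def by auto
    have v'q: "v' < q" using ok v' r1 j1C unfolding supp_def by blast
    have r1b: "r1 \<in> blk j1 v'" using v' r1 unfolding supp_def blk_def by auto
    have star1: "\<forall>r\<in>blk j1 v'. M r j2 = None"
    proof -
      have "\<not> blk j1 v' \<subseteq> supp j2" using r1b r1 by blast
      then have "blk j1 v' \<inter> supp j2 = {}" using ch1[OF v'q] by blast
      then show ?thesis unfolding blk_def supp_def by auto
    qed
    obtain r2 where r2: "r2 \<in> supp j2" "r2 \<notin> supp j1" using nn by blast
    then obtain w' where w': "M r2 j2 = Some w'" unfolding supp_def by auto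
    have w'q: "w' < q" using ok w' r2 j2C unfolding supp_def by blast
    have r2b: "r2 \<in> blk j2 w'" using w' r2 unfolding supp_def blk_def by auto
    have star2: "\<forall>r\<in>blk j2 w'. M r j1 = None"
    proof -
      have "\<not> blk j2 w' \<subseteq> supp j1" using r2b r2 by blast
      then have "blk j2 w' \<inter> supp j1 = {}" using ch2[OF w'q] by blast
      then show ?thesis unfolding blk_def supp_def by auto
    qed
    obtain r0 where r0: "r0 \<in> supp j1" "r0 \<in> supp j2" using ov by blast
    then obtain v w where vw: "M r0 j1 = Some v" "M r0 j2 = Some w" unfolding supp_def by auto
    have vq: "v < q" and wq: "w < q" using ok vw r0 j1C j2C unfolding supp_def by blast+
    have r0B: "r0 \<in> blk j1 v" and r0D: "r0 \<in> blk j2 w" using vw r0 unfolding supp_def blk_def by auto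
    have nested: "blk j1 v \<subseteq> blk j2 w \<or> blk j2 w \<subseteq> blk j1 v"
    proof (cases k1)
      case 0
      then have "card (blk j1 v) = 1" using n1 vq node_one by simp
      then obtain r where "blk j1 v = {r}" by (meson card_1_singletonE)
      then show ?thesis using r0B r0D by auto
    next
      case (Suc k1')
      show ?thesis
      proof (cases k2)
        case 0
        then have "card (blk j2 w) = 1" using n2 wq node_one by simp
        then obtain r where "blk j2 w = {r}" by (meson card_1_singletonE)
        then show ?thesis using r0B r0D by auto
      next
        case (Suc k2')
        have n1': "node j1 (Suc (Suc k1'))" using n1 \<open>k1 = Suc k1'\<close> by simp
        have n2': "node j2 (Suc (Suc k2'))" using n2 Suc by simp
        obtain ja where ja: "supp ja = blk j1 v" "node ja (Suc k1')" using node_child[OF n1' vq] by blast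
        obtain jb where jb: "supp jb = blk j2 w" "node jb (Suc k2')" using node_child[OF n2' wq] by blast
        have "supp ja \<subseteq> supp jb \<or> supp jb \<subseteq> supp ja"
        proof (rule less.hyps[of k1' k2' ja jb])
          show "k1' + k2' < k1 + k2" using \<open>k1 = Suc k1'\<close> Suc by simp
          show "supp ja \<inter> supp jb \<noteq> {}" using ja jb r0B r0D by auto
        qed (use ja jb in auto)
        then show ?thesis using ja jb by simp
      qed
    qed
    then show False
    proof
      assume "blk j1 v \<subseteq> blk j2 w"
      then have "\<forall>r\<in>blk j1 v. M r j2 = Some w" unfolding blk_def by auto
      then show False using LemX[OF j1C j2C ne v'q vq _ star1] r0B by blast
    next
      assume "blk j2 w \<subseteq> blk j1 v"
      then have "\<forall>r\<in>blk j2 w. M r j1 = Some v" unfolding blk_def by auto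
      then show False using LemX[OF j2C j1C ne[symmetric] w'q wq _ star2] r0D by blast
    qed
  qed
qed

end

context SPN begin

lemma main: "c \<in> C \<Longrightarrow> \<exists>k. node c (Suc k)"
proof (induction "card (supp c)" arbitrary: c rule: less_induct)
  case less
  have c: "c \<in> C" by fact
  obtain l where S1: "\<forall>a<q. card (Priv (blk c a)) = l \<and> card (blk c a) = 1 + (q - 1) * l"
    and S2: "Priv (supp c) = insert c (\<Union>a<q. Priv (blk c a))" using struct[OF c] by blast
  show ?case
  proof (cases "l = 0")
    case True
    then have "\<forall>v<q. card (blk c v) = 1" using S1 by simp
    then show ?thesis using node_intro1[OF c S2] by blast
  next
    case False
    have stepD: "\<exists>j k. supp j = blk c b \<and> node j (Suc k)" if b: "b < q" for b
    proof -
      define P where "P = Priv (blk c b)"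
      have cP: "card P = l" using S1 b unfolding P_def by simp
      have fP: "finite P" unfolding P_def by (rule fin_Priv)
      have Pne: "P \<noteq> {}" using cP False fP by auto
      obtain b' where b': "b' < q" "b' \<noteq> b" using other_val[OF b] by blast
      have bps: "blk c b \<subset> supp c"
      proof -
        have "blk c b' \<subseteq> supp c" "blk c b' \<noteq> {}" "blk c b' \<inter> blk c b = {}"
          using blk_sub blk_ne[OF c b'(1)] blk_disj[OF b'(2)] by auto
        then show ?thesis using blk_sub[of c b] by blast
      qed
      have IHP: "\<exists>k. node j (Suc k)" if j: "j \<in> P" for j
      proof -
        have jC: "j \<in> C" and sj: "supp j \<subseteq> blk c b" using j unfolding P_def Priv_def by auto
        have "supp j \<subset> supp c" using sj bps by blast
        then have "card (supp j) < card (supp c)" using psubset_card_mono[OF fin_supp] by blast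
        then show ?thesis using less.hyps jC by blast
      qed
      define m0 where "m0 = Max ((\<lambda>j. card (supp j)) ` P)"
      have "m0 \<in> (\<lambda>j. card (supp j)) ` P" unfolding m0_def using fP Pne by (intro Max_in) auto
      then obtain j where j: "j \<in> P" "card (supp j) = m0" by auto
      have mx: "card (supp j') \<le> card (supp j)" if "j' \<in> P" for j'
        using Max_ge[of "(\<lambda>j. card (supp j)) ` P"] fP that j(2) unfolding m0_def by auto
      obtain k where nk: "node j (Suc k)" using IHP[OF j(1)] by blast
      define R0 where "R0 = supp j"
      have R0b: "R0 \<subseteq> blk c b" using j(1) unfolding P_def Priv_def R0_def by auto
      show ?thesis
      proof (cases "R0 = blk c b")
        case True then show ?thesis using nk unfolding R0_def by blast
      next
        case False
        define Y where "Y = blk c b - R0"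
        have Yne: "Y \<noteq> {}" using False R0b unfolding Y_def by auto
        have YR: "Y \<subseteq> R" unfolding Y_def blk_def by auto
        have sub: "P \<subseteq> Priv R0 \<union> Priv Y"
        proof
          fix j' assume j': "j' \<in> P"
          then have j'C: "j' \<in> C" and sj': "supp j' \<subseteq> blk c b" unfolding P_def Priv_def by auto
          obtain k' where nk': "node j' (Suc k')" using IHP[OF j'] by blast
          show "j' \<in> Priv R0 \<union> Priv Y"
          proof (cases "supp j \<inter> supp j' = {}")
            case True
            then have "supp j' \<subseteq> Y" using sj' unfolding Y_def R0_def by auto
            then show ?thesis using j'C unfolding Priv_def by auto
          next
            case False
            from lam[OF nk nk' False] have "supp j \<subseteq> supp j' \<or> supp j' \<subseteq> supp j" .
            then have "supp j' \<subseteq> R0"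
            proof
              assume h: "supp j \<subseteq> supp j'"
              have "card (supp j) = card (supp j')" using mx[OF j'] card_mono[OF fin_supp h] by simp
              then have "supp j = supp j'" using card_subset_eq[OF fin_supp h] by simp
              then show ?thesis unfolding R0_def by simp
            next
              assume "supp j' \<subseteq> supp j" then show ?thesis unfolding R0_def .
            qed
            then show ?thesis using j'C unfolding Priv_def by auto
          qed
        qed
        have c1: "card P \<le> card (Priv R0) + card (Priv Y)"
        proof -
          have "card P \<le> card (Priv R0 \<union> Priv Y)" using card_mono[OF _ sub] fin_Priv by blast
          also have "\<dots> \<le> card (Priv R0) + card (Priv Y)" by (rule card_Un_le)
          finally show ?thesis .
        qed
        have c2: "(q - 1) * card (Priv R0) + 1 = card R0"
          using N1[OF nk] N2[OF nk] fw_id[of q "Suc k"] q2 unfolding R0_def by simp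
        have c3: "(q - 1) * card (Priv Y) + 1 \<le> card Y" using LemC[OF YR Yne] .
        have c4: "card R0 + card Y = card (blk c b)"
        proof -
          have "card Y = card (blk c b) - card R0" unfolding Y_def
            using R0b fin_blk by (simp add: card_Diff_subset finite_subset)
          moreover have "card R0 \<le> card (blk c b)" using card_mono[OF fin_blk R0b] .
          ultimately show ?thesis by simp
        qed
        have c5: "card (blk c b) = 1 + (q - 1) * l" using S1 b by simp
        have "(q - 1) * l \<le> (q - 1) * card (Priv R0) + (q - 1) * card (Priv Y)"
          using mult_le_mono2[OF c1, of "q - 1"] cP by (simp add: algebra_simps)
        then show ?thesis using c2 c3 c4 c5 by linarith
      qed
    qed
    obtain j0 k0 where j0: "supp j0 = blk c 0" "node j0 (Suc k0)" using stepD[of 0] q2 by auto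
    have all: "\<forall>v<q. \<exists>j'. supp j' = blk c v \<and> node j' (Suc k0)"
    proof (intro allI impI)
      fix v assume v: "v < q"
      obtain j' k' where j': "supp j' = blk c v" "node j' (Suc k')" using stepD[OF v] by blast
      have "card (blk c v) = card (blk c 0)" using S1 v q2 by simp
      then have "q ^ Suc k' = q ^ Suc k0" using N1[OF j'(2)] N1[OF j0(2)] j'(1) j0(1) by simp
      then have "k' = k0" using q2 power_inject_exp[of q "Suc k'" "Suc k0"] by simp
      then show "\<exists>j'. supp j' = blk c v \<and> node j' (Suc k0)" using j' by blast
    qed
    show ?thesis using node_intro2[OF c S2 all] by blast
  qed
qed

end

lemma divmod_aux:
  fixes Q v x :: nat
  assumes "x < Q"
  shows "(v * Q + x) div Q = v" "(v * Q + x) mod Q = x"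
  using assms by auto

lemma lt_aux:
  fixes Q v x q :: nat
  assumes "x < Q" "v < q"
  shows "v * Q + x < q * Q"
proof -
  have "v * Q + x < v * Q + Q" using assms(1) by simp
  also have "\<dots> = (v + 1) * Q" by simp
  also have "\<dots> \<le> q * Q" using assms(2) by (intro mult_le_mono1) simp
  finally show ?thesis .
qed

context SPL begin

lemma N3:
  "node j (Suc k) \<Longrightarrow> \<exists>\<rho> \<gamma>. bij_betw \<rho> (supp j) {..<q ^ Suc k} \<and>
     bij_betw \<gamma> (Priv (supp j)) {..<fractal_width q (Suc k)} \<and>
     (\<forall>r\<in>supp j. \<forall>i\<in>Priv (supp j). M r i = fractal q (Suc k) (\<rho> r) (\<gamma> i))"
proof (induction k arbitrary: j)
  case 0
  have jC: "j \<in> C" using node_C[OF 0] .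
  have P: "Priv (supp j) = insert j (\<Union>v<q. Priv (blk j v))" using node_Priv[OF 0] .
  have b1: "\<forall>v<q. card (blk j v) = 1" using node_one[OF 0] by blast
  have "\<forall>v<q. Priv (blk j v) = {}" using b1 Priv_small fin_blk by simp
  then have Pj: "Priv (supp j) = {j}" using P by auto
  define \<rho> where "\<rho> r = the (M r j)" for r
  have rv: "M r j = Some (\<rho> r) \<and> \<rho> r < q" if r: "r \<in> supp j" for r
  proof -
    obtain a where a: "M r j = Some a" using r unfolding supp_def by auto
    then have "a < q" using ok r jC unfolding supp_def by blast
    then show ?thesis using a unfolding \<rho>_def by simp
  qed
  have inj: "inj_on \<rho> (supp j)"
  proof (rule inj_onI)
    fix r1 r2 assume r: "r1 \<in> supp j" "r2 \<in> supp j" "\<rho> r1 = \<rho> r2"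
    have "r1 \<in> blk j (\<rho> r1)" "r2 \<in> blk j (\<rho> r1)" using rv[OF r(1)] rv[OF r(2)] r unfolding blk_def supp_def by auto
    moreover have "card (blk j (\<rho> r1)) = 1" using b1 rv[OF r(1)] by blast
    ultimately show "r1 = r2" by (auto simp: card_Suc_eq)
  qed
  have b\<rho>: "bij_betw \<rho> (supp j) {..<q ^ Suc 0}"
  proof (rule bij_from_inj_card[OF inj])
    show "\<rho> ` supp j \<subseteq> {..<q ^ Suc 0}"
    proof
      fix y assume "y \<in> \<rho> ` supp j"
      then obtain r where r: "r \<in> supp j" "y = \<rho> r" by blast
      then show "y \<in> {..<q ^ Suc 0}" using rv[OF r(1)] by simp
    qed
    show "card (supp j) = card {..<q ^ Suc 0}" using N1[OF 0] by simp
  qed simp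
  have b\<gamma>: "bij_betw (\<lambda>_. 0::nat) (Priv (supp j)) {..<fractal_width q (Suc 0)}"
    unfolding Pj by (rule bij_from_inj_card) auto
  have ent: "\<forall>r\<in>supp j. \<forall>i\<in>Priv (supp j). M r i = fractal q (Suc 0) (\<rho> r) ((\<lambda>_. 0) i)"
  proof (intro ballI)
    fix r i assume r: "r \<in> supp j" and i: "i \<in> Priv (supp j)"
    then have "i = j" using Pj by simp
    then show "M r i = fractal q (Suc 0) (\<rho> r) ((\<lambda>_. 0) i)" using rv[OF r] by simp
  qed
  show ?case using b\<rho> b\<gamma> ent by blast
next
  case (Suc k)
  have jC: "j \<in> C" using node_C[OF Suc.prems] .
  have P: "Priv (supp j) = insert j (\<Union>v<q. Priv (blk j v))" using node_Priv[OF Suc.prems] .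
  have "\<forall>v. \<exists>j'. v < q \<longrightarrow> supp j' = blk j v \<and> node j' (Suc k)" using node_child[OF Suc.prems] by blast
  from choice[OF this] obtain ch where chf: "\<forall>v. v < q \<longrightarrow> supp (ch v) = blk j v \<and> node (ch v) (Suc k)" by blast
  define Q where "Q = q ^ Suc k"
  define W where "W = fractal_width q (Suc k)"
  have "\<forall>v. \<exists>\<rho> \<gamma>. v < q \<longrightarrow> bij_betw \<rho> (blk j v) {..<Q} \<and> bij_betw \<gamma> (Priv (blk j v)) {..<W} \<and>
      (\<forall>r\<in>blk j v. \<forall>i\<in>Priv (blk j v). M r i = fractal q (Suc k) (\<rho> r) (\<gamma> i))"
  proof
    fix v
    show "\<exists>\<rho> \<gamma>. v < q \<longrightarrow> bij_betw \<rho> (blk j v) {..<Q} \<and> bij_betw \<gamma> (Priv (blk j v)) {..<W} \<and>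
      (\<forall>r\<in>blk j v. \<forall>i\<in>Priv (blk j v). M r i = fractal q (Suc k) (\<rho> r) (\<gamma> i))"
    proof (cases "v < q")
      case True
      then have e: "supp (ch v) = blk j v" and n: "node (ch v) (Suc k)" using chf by auto
      have "\<exists>\<rho> \<gamma>. bij_betw \<rho> (blk j v) {..<Q} \<and> bij_betw \<gamma> (Priv (blk j v)) {..<W} \<and>
         (\<forall>r\<in>blk j v. \<forall>i\<in>Priv (blk j v). M r i = fractal q (Suc k) (\<rho> r) (\<gamma> i))"
        using Suc.IH[OF n] unfolding e Q_def W_def .
      then show ?thesis by blast
    qed auto
  qed
  from choice[OF this] obtain RH where "\<forall>v. \<exists>\<gamma>. v < q \<longrightarrow> bij_betw (RH v) (blk j v) {..<Q} \<and> bij_betw \<gamma> (Priv (blk j v)) {..<W} \<and>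
      (\<forall>r\<in>blk j v. \<forall>i\<in>Priv (blk j v). M r i = fractal q (Suc k) (RH v r) (\<gamma> i))" by blast
  from choice[OF this] obtain GH where RG: "\<forall>v. v < q \<longrightarrow> bij_betw (RH v) (blk j v) {..<Q} \<and> bij_betw (GH v) (Priv (blk j v)) {..<W} \<and>
      (\<forall>r\<in>blk j v. \<forall>i\<in>Priv (blk j v). M r i = fractal q (Suc k) (RH v r) (GH v i))" by blast
  have W1: "W \<ge> 1" unfolding W_def by simp
  define vr where "vr r = the (M r j)" for r
  define \<rho> where "\<rho> r = vr r * Q + RH (vr r) r" for r
  define vc where "vc i = (SOME v. v < q \<and> i \<in> Priv (blk j v))" for i
  define \<gamma> where "\<gamma> i = (if i = j then 0 else 1 + vc i * W + GH (vc i) i)" for i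
  have rblk: "vr r < q \<and> r \<in> blk j (vr r)" if r: "r \<in> supp j" for r
  proof -
    obtain a where a: "M r j = Some a" using r unfolding supp_def by auto
    then have "a < q" using ok r jC unfolding supp_def by blast
    then show ?thesis using a r unfolding vr_def blk_def supp_def by simp
  qed
  have iblk: "vc i < q \<and> i \<in> Priv (blk j (vc i))" if i: "i \<in> Priv (supp j)" "i \<noteq> j" for i
  proof -
    have "\<exists>v. v < q \<and> i \<in> Priv (blk j v)" using i P by auto
    then show ?thesis unfolding vc_def by (rule someI_ex)
  qed
  have RHlt: "RH v r < Q" if "v < q" "r \<in> blk j v" for v r
  proof -
    have "bij_betw (RH v) (blk j v) {..<Q}" using RG that(1) by blast
    then show ?thesis using that(2) unfolding bij_betw_def by auto
  qed
  have GHlt: "GH v i < W" if "v < q" "i \<in> Priv (blk j v)" for v i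
  proof -
    have "bij_betw (GH v) (Priv (blk j v)) {..<W}" using RG that(1) by blast
    then show ?thesis using that(2) unfolding bij_betw_def by auto
  qed
  have \<rho>dm: "\<rho> r div Q = vr r \<and> \<rho> r mod Q = RH (vr r) r" if r: "r \<in> supp j" for r
    using divmod_aux[OF RHlt[OF conjunct1[OF rblk[OF r]] conjunct2[OF rblk[OF r]]]] unfolding \<rho>_def by simp
  have qQ: "q ^ Suc (Suc k) = q * Q" unfolding Q_def by simp
  have fwS: "fractal_width q (Suc (Suc k)) = 1 + q * W" unfolding W_def by simp
  have inj\<rho>: "inj_on \<rho> (supp j)"
  proof (rule inj_onI)
    fix r1 r2 assume r: "r1 \<in> supp j" "r2 \<in> supp j" "\<rho> r1 = \<rho> r2"
    have v: "vr r1 = vr r2" using \<rho>dm[OF r(1)] \<rho>dm[OF r(2)] r(3) by simp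
    have "RH (vr r1) r1 = RH (vr r1) r2" using \<rho>dm[OF r(1)] \<rho>dm[OF r(2)] r(3) v by simp
    moreover have "inj_on (RH (vr r1)) (blk j (vr r1))" using RG rblk[OF r(1)] unfolding bij_betw_def by blast
    moreover have "r1 \<in> blk j (vr r1)" "r2 \<in> blk j (vr r1)" using rblk[OF r(1)] rblk[OF r(2)] v by auto
    ultimately show "r1 = r2" by (meson inj_onD)
  qed
  have b\<rho>: "bij_betw \<rho> (supp j) {..<q ^ Suc (Suc k)}"
  proof (rule bij_from_inj_card[OF inj\<rho>])
    show "\<rho> ` supp j \<subseteq> {..<q ^ Suc (Suc k)}"
    proof
      fix y assume "y \<in> \<rho> ` supp j"
      then obtain r where r: "r \<in> supp j" "y = \<rho> r" by auto
      have "\<rho> r < q * Q" unfolding \<rho>_def using lt_aux[OF RHlt] rblk[OF r(1)] by blast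
      then show "y \<in> {..<q ^ Suc (Suc k)}" unfolding r(2) qQ lessThan_iff .
    qed
    show "card (supp j) = card {..<q ^ Suc (Suc k)}" using N1[OF Suc.prems] by simp
  qed simp
  have \<gamma>pos: "\<gamma> i \<ge> 1" if "i \<noteq> j" for i using that unfolding \<gamma>_def by simp
  have \<gamma>dm: "(\<gamma> i - 1) div W = vc i \<and> (\<gamma> i - 1) mod W = GH (vc i) i" if i: "i \<in> Priv (supp j)" "i \<noteq> j" for i
    using divmod_aux[OF GHlt[OF conjunct1[OF iblk[OF i]] conjunct2[OF iblk[OF i]]]] i(2) unfolding \<gamma>_def by simp
  have inj\<gamma>: "inj_on \<gamma> (Priv (supp j))"
  proof (rule inj_onI)
    fix i1 i2 assume i: "i1 \<in> Priv (supp j)" "i2 \<in> Priv (supp j)" "\<gamma> i1 = \<gamma> i2"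
    show "i1 = i2"
    proof (cases "i1 = j \<or> i2 = j")
      case True
      then show ?thesis
      proof
        assume h: "i1 = j"
        then have "\<gamma> i2 = 0" using i(3) unfolding \<gamma>_def by simp
        then show ?thesis using h \<gamma>pos[of i2] by (cases "i2 = j") auto
      next
        assume h: "i2 = j"
        then have "\<gamma> i1 = 0" using i(3) unfolding \<gamma>_def by simp
        then show ?thesis using h \<gamma>pos[of i1] by (cases "i1 = j") auto
      qed
    next
      case False
      then have n: "i1 \<noteq> j" "i2 \<noteq> j" by auto
      have v: "vc i1 = vc i2" using \<gamma>dm[OF i(1) n(1)] \<gamma>dm[OF i(2) n(2)] i(3) by simp
      have "GH (vc i1) i1 = GH (vc i1) i2" using \<gamma>dm[OF i(1) n(1)] \<gamma>dm[OF i(2) n(2)] i(3) v by simp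
      moreover have "inj_on (GH (vc i1)) (Priv (blk j (vc i1)))" using RG iblk[OF i(1) n(1)] unfolding bij_betw_def by blast
      moreover have "i1 \<in> Priv (blk j (vc i1))" "i2 \<in> Priv (blk j (vc i1))" using iblk[OF i(1) n(1)] iblk[OF i(2) n(2)] v by auto
      ultimately show "i1 = i2" by (meson inj_onD)
    qed
  qed
  have b\<gamma>: "bij_betw \<gamma> (Priv (supp j)) {..<fractal_width q (Suc (Suc k))}"
  proof (rule bij_from_inj_card[OF inj\<gamma>])
    show "\<gamma> ` Priv (supp j) \<subseteq> {..<fractal_width q (Suc (Suc k))}"
    proof
      fix y assume "y \<in> \<gamma> ` Priv (supp j)"
      then obtain i where i: "i \<in> Priv (supp j)" "y = \<gamma> i" by auto
      show "y \<in> {..<fractal_width q (Suc (Suc k))}"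
      proof (cases "i = j")
        case True then show ?thesis using i fwS by (simp add: \<gamma>_def)
      next
        case False
        have "vc i * W + GH (vc i) i < q * W" using lt_aux[OF GHlt] iblk[OF i(1) False] by blast
        then show ?thesis using i False fwS by (simp add: \<gamma>_def)
      qed
    qed
    show "card (Priv (supp j)) = card {..<fractal_width q (Suc (Suc k))}" using N2[OF Suc.prems] by simp
  qed simp
  have ent: "M r i = fractal q (Suc (Suc k)) (\<rho> r) (\<gamma> i)" if r: "r \<in> supp j" and i: "i \<in> Priv (supp j)" for r i
  proof -
    have unf: "fractal q (Suc (Suc k)) (\<rho> r) (\<gamma> i) =
      (if \<gamma> i = 0 then Some (\<rho> r div Q) else
        (if (\<gamma> i - 1) div W = \<rho> r div Q then fractal q (Suc k) (\<rho> r mod Q) ((\<gamma> i - 1) mod W) else None))"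
      unfolding Q_def W_def by (simp add: Let_def)
    show ?thesis
    proof (cases "i = j")
      case True
      then have "\<gamma> i = 0" unfolding \<gamma>_def by simp
      then show ?thesis using unf \<rho>dm[OF r] rblk[OF r] True unfolding blk_def by simp
    next
      case False
      have g0: "\<gamma> i \<noteq> 0" using \<gamma>pos[OF False] by simp
      have vi: "vc i < q" "i \<in> Priv (blk j (vc i))" using iblk[OF i False] by auto
      show ?thesis
      proof (cases "vc i = vr r")
        case True
        have "fractal q (Suc (Suc k)) (\<rho> r) (\<gamma> i) = fractal q (Suc k) (RH (vr r) r) (GH (vr r) i)"
          using unf g0 \<rho>dm[OF r] \<gamma>dm[OF i False] True by simp
        also have "\<dots> = M r i"
        proof -
          have "\<forall>r\<in>blk j (vc i). \<forall>i'\<in>Priv (blk j (vc i)). M r i' = fractal q (Suc k) (RH (vc i) r) (GH (vc i) i')"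
            using RG vi(1) by blast
          then show ?thesis using rblk[OF r] vi(2) True by simp
        qed
        finally show ?thesis by simp
      next
        case ne: False
        have "fractal q (Suc (Suc k)) (\<rho> r) (\<gamma> i) = None"
          using unf g0 \<rho>dm[OF r] \<gamma>dm[OF i False] ne by simp
        moreover have "M r i = None"
        proof -
          have "r \<notin> blk j (vc i)" using rblk[OF r] blk_disj[OF ne] by auto
          then have "r \<notin> supp i" using vi(2) unfolding Priv_def by auto
          then show ?thesis using r unfolding supp_def by auto
        qed
        ultimately show ?thesis by simp
      qed
    qed
  qed
  show ?case using b\<rho> b\<gamma> ent by blast
qed

end

theorem lemma5:
  fixes q m n :: nat and M :: "nat \<Rightarrow> nat \<Rightarrow> nat option"
  assumes "q \<ge> 2"
    and "star_partition q {..<m} {..<n} M"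
    and "A_primitive {..<m} {..<n} M"
    and "equal_dimension {..<m} {..<n} M"
    and "\<not> expandable q {..<m} {..<n} M"
    and "c < n"
  shows "(\<exists>k. card {r\<in>{..<m}. M r c \<noteq> None} = q ^ k) \<and>
         (\<exists>R' C'. transfractal q {..<m} {..<n} M R' C' \<and> R' = {r\<in>{..<m}. M r c \<noteq> None} \<and>
                  leading_column M R' C' c)"
proof -
  interpret SPN q "{..<m}" "{..<n}" M
    using assms(1,2,3,5) by unfold_locales auto
  have cC: "c \<in> {..<n}" using assms(6) by simp
  obtain k where nk: "node c (Suc k)" using main[OF cC] by blast
  have sd: "supp c = {r\<in>{..<m}. M r c \<noteq> None}" unfolding supp_def by simp
  have c1: "card {r\<in>{..<m}. M r c \<noteq> None} = q ^ Suc k" using N1[OF nk] sd by simp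
  obtain \<rho> \<gamma> where fr: "bij_betw \<rho> (supp c) {..<q ^ Suc k}"
    "bij_betw \<gamma> (Priv (supp c)) {..<fractal_width q (Suc k)}"
    "\<forall>r\<in>supp c. \<forall>i\<in>Priv (supp c). M r i = fractal q (Suc k) (\<rho> r) (\<gamma> i)"
    using N3[OF nk] by blast
  have P: "Priv (supp c) = insert c (\<Union>v<q. Priv (blk c v))" using node_Priv[OF nk] .
  have tf: "transfractal q {..<m} {..<n} M (supp c) (Priv (supp c))"
    unfolding transfractal_def
  proof (intro conjI)
    show "supp c \<subseteq> {..<m}" unfolding supp_def by auto
    show "Priv (supp c) \<subseteq> {..<n}" unfolding Priv_def by auto
    show "is_fractal q M (supp c) (Priv (supp c))"
      unfolding is_fractal_def using fr by (intro exI[of _ "Suc k"]) auto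
    show "\<forall>j\<in>Priv (supp c). \<forall>r\<in>{..<m} - supp c. M r j = None"
      unfolding Priv_def supp_def by auto
  qed
  have lc: "leading_column M (supp c) (Priv (supp c)) c"
    unfolding leading_column_def
  proof (intro conjI ballI impI)
    show "c \<in> Priv (supp c)" using P by simp
    show "\<And>r. r \<in> supp c \<Longrightarrow> M r c \<noteq> None" unfolding supp_def by auto
    fix c' assume c': "c' \<in> Priv (supp c)" and full: "\<forall>r\<in>supp c. M r c' \<noteq> None"
    show "c' = c"
    proof (rule ccontr)
      assume ne: "c' \<noteq> c"
      then obtain v where v: "v < q" "c' \<in> Priv (blk c v)" using c' P by auto
      have "supp c \<subseteq> supp c'" using full unfolding supp_def by auto
      also have "supp c' \<subseteq> blk c v" using v(2) unfolding Priv_def by auto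
      finally have "c \<in> Priv (blk c v)" using cC unfolding Priv_def by auto
      then show False using c_notin_Priv_blk[OF cC v(1)] by simp
    qed
  qed
  show ?thesis using c1 tf lc sd by blast
qed


end
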